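(* Let $\mathcal{A}$ be a complex vector space with a linear endomorphism $\alpha$ and two bilinear operations $\circ$ and $[\cdot,\cdot]$. Let $\mathcal{R}_{\mathcal{A}}=\mathbb{C}[\partial]\otimes\mathcal{A}$ be the free $\mathbb{C}[\partial]$-module over $\mathcal{A}$, extend $\alpha$ by $\alpha(f(\partial)\otimes u)=f(\partial)\otimes\alpha(u)$, and define a $\lambda$-bracket on $\mathcal{A}$ by $[u_\lambda v]=[v,u]+\partial(v\circ u)+\lambda(v\circ u+u\circ v)$ for $u,v\in\mathcal{A}$, extended to $\mathcal{R}_{\mathcal{A}}$ by $[f(\partial)u_\lambda\, h(\partial)v]=f(-\lambda)h(\partial+\lambda)[u_\lambda v]$. Then $(\mathcal{A},[\cdot,\cdot],\circ,\alpha)$ is a Hom Gel'fand-Dorfman bialgebra if and only if $(\mathcal{R}_{\mathcal{A}},[\cdot_\lambda\cdot],\alpha)$ is a Hom-Lie conformal algebra of degree $2$.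
   Context: A Hom-Lie algebra is a vector space with a bilinear map $[\cdot,\cdot]$ and linear map $\alpha$ with $[x,y]=-[y,x]$ and $[[x,y],\alpha(z)]+[[y,z],\alpha(x)]+[[z,x],\alpha(y)]=0$. A Hom-Novikov algebra is a vector space with a bilinear operation $\circ$ and linear endomorphism $\alpha$ such that $(x\circ y)\circ\alpha(z)-\alpha(x)\circ(y\circ z)=(y\circ x)\circ\alpha(z)-\alpha(y)\circ(x\circ z)$ and $(x\circ y)\circ\alpha(z)=(x\circ z)\circ\alpha(y)$. A Hom Gel'fand-Dorfman bialgebra is a vector space $\mathcal{A}$ with a linear endomorphism $\alpha$ and two bilinear operations $[\cdot,\cdot],\circ$ such that $(\mathcal{A},[\cdot,\cdot],\alpha)$ is a Hom-Lie algebra, $(\mathcal{A},\circ,\alpha)$ is a Hom-Novikov algebra, and $[x\circ y,\alpha(z)]-[x\circ z,\alpha(y)]+[x,y]\circ\alpha(z)-[x,z]\circ\alpha(y)-\alpha(x)\circ[y,z]=0$ for all $x,y,z$. A Hom-Lie conformal algebra is a $\mathbb{C}[\partial]$-module $\mathcal{R}$ with a linear endomorphism $\alpha$ satisfying $\alpha\partial=\partial\alpha$ and a $\mathbb{C}$-bilinear map $[\cdot_\lambda\cdot]:\mathcal{R}\otimes\mathcal{R}\to\mathcal{R}[\lambda]=\mathbb{C}[\lambda]\otimes\mathcal{R}$ such that for all $a,b,c\in\mathcal{R}$: $[\partial a_\lambda b]=-\lambda[a_\lambda b]$; $[a_\lambda b]=-[b_{-\lambda-\partial}a]$ (meaning: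 if $[b_\mu a]=\sum_j\mu^jc_j$ then $[b_{-\lambda-\partial}a]=\sum_j(-\lambda-\partial)^jc_j$); and $[\alpha(a)_\lambda[b_\mu c]]=[[a_\lambda b]_{\lambda+\mu}\alpha(c)]+[\alpha(b)_\mu[a_\lambda c]]$ (brackets extended coefficientwise in $\lambda,\mu$). For a positive integer $m$, it is of degree $m$ if for all $a,b\in\mathcal{R}$ there are $w_{i,j}\in\mathcal{R}$ with $[a_\lambda b]=\sum_{j\ge0,\,i+j<m}\partial^iw_{i,j}\lambda^j$. *)

theory Defs
  imports "HOL-Analysis.Analysis" "HOL-Library.Function_Algebras"
begin

definition hom_lie :: "('a::ab_group_add \<Rightarrow> 'a \<Rightarrow> 'a) \<Rightarrow> ('a \<Rightarrow> 'a) \<Rightarrow> bool" where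
  "hom_lie br \<alpha> \<longleftrightarrow>
     (\<forall>x y. br x y = - br y x) \<and>
     (\<forall>x y z. br (br x y) (\<alpha> z) + br (br y z) (\<alpha> x) + br (br z x) (\<alpha> y) = 0)"

definition hom_novikov :: "('a::ab_group_add \<Rightarrow> 'a \<Rightarrow> 'a) \<Rightarrow> ('a \<Rightarrow> 'a) \<Rightarrow> bool" where
  "hom_novikov circ \<alpha> \<longleftrightarrow>
     (\<forall>x y z. circ (circ x y) (\<alpha> z) - circ (\<alpha> x) (circ y z)
              = circ (circ y x) (\<alpha> z) - circ (\<alpha> y) (circ x z)) \<and>
     (\<forall>x y z. circ (circ x y) (\<alpha> z) = circ (circ x z) (\<alpha> y))"

definition hom_GD_bialgebra ::
  "('a::ab_group_add \<Rightarrow> 'a \<Rightarrow> 'a) \<Rightarrow> ('a \<Rightarrow> 'a \<Rightarrow> 'a) \<Rightarrow> ('a \<Rightarrow> 'a) \<Rightarrow> bool" where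
  "hom_GD_bialgebra br circ \<alpha> \<longleftrightarrow>
     hom_lie br \<alpha> \<and> hom_novikov circ \<alpha> \<and>
     (\<forall>x y z. br (circ x y) (\<alpha> z) - br (circ x z) (\<alpha> y) + circ (br x y) (\<alpha> z)
              - circ (br x z) (\<alpha> y) - circ (\<alpha> x) (br y z) = 0)"

definition cbilinear :: "(complex \<Rightarrow> 'a::ab_group_add \<Rightarrow> 'a) \<Rightarrow> ('a \<Rightarrow> 'a \<Rightarrow> 'a) \<Rightarrow> bool" where
  "cbilinear sc f \<longleftrightarrow> (\<forall>x. Vector_Spaces.linear sc sc (f x)) \<and> (\<forall>y. Vector_Spaces.linear sc sc (\<lambda>x. f x y))"

text \<open>The C[d]-module is a C-subspace M (with scalar multiplication sc) together with a
  C-linear operator D (the action of d). An element of M[lambda] is represented by its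
  coefficient sequence nat => 'r (coefficient of lambda^j), with finite support.\<close>

definition hom_lie_conformal ::
  "(complex \<Rightarrow> 'r::ab_group_add \<Rightarrow> 'r) \<Rightarrow> 'r set \<Rightarrow> ('r \<Rightarrow> 'r) \<Rightarrow> ('r \<Rightarrow> 'r)
     \<Rightarrow> ('r \<Rightarrow> 'r \<Rightarrow> nat \<Rightarrow> 'r) \<Rightarrow> bool" where
  "hom_lie_conformal sc M D \<alpha> B \<longleftrightarrow>
     vector_space sc \<and>
     0 \<in> M \<and> (\<forall>a\<in>M. \<forall>b\<in>M. a + b \<in> M) \<and> (\<forall>c. \<forall>a\<in>M. sc c a \<in> M) \<and>
     (\<forall>a\<in>M. D a \<in> M \<and> \<alpha> a \<in> M \<and> \<alpha> (D a) = D (\<alpha> a)) \<and>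
     (\<forall>a\<in>M. \<forall>b\<in>M. D (a + b) = D a + D b \<and> \<alpha> (a + b) = \<alpha> a + \<alpha> b) \<and>
     (\<forall>c. \<forall>a\<in>M. D (sc c a) = sc c (D a) \<and> \<alpha> (sc c a) = sc c (\<alpha> a)) \<and>
     (\<forall>a\<in>M. \<forall>b\<in>M. finite {j. B a b j \<noteq> 0} \<and> (\<forall>j. B a b j \<in> M)) \<and>
     (\<forall>a\<in>M. \<forall>b\<in>M. \<forall>c\<in>M. \<forall>j.
        B (a + b) c j = B a c j + B b c j \<and> B c (a + b) j = B c a j + B c b j) \<and>
     (\<forall>z. \<forall>a\<in>M. \<forall>b\<in>M. \<forall>j. B (sc z a) b j = sc z (B a b j) \<and> B a (sc z b) j = sc z (B a b j)) \<and>
     \<comment> \<open>[d a_lambda b] = - lambda [a_lambda b]\<close>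
     (\<forall>a\<in>M. \<forall>b\<in>M. \<forall>j. B (D a) b j = (if j = 0 then 0 else - B a b (j - 1))) \<and>
     \<comment> \<open>[a_lambda b] = - [b_(-lambda-d) a]; coefficient of lambda^k\<close>
     (\<forall>a\<in>M. \<forall>b\<in>M. \<forall>k. B a b k =
        - (\<Sum>j\<in>{j. B b a j \<noteq> 0}. sc ((-1) ^ j * of_nat (j choose k)) ((D ^^ (j - k)) (B b a j)))) \<and>
     \<comment> \<open>Hom-Jacobi identity; coefficient of lambda^j mu^k\<close>
     (\<forall>a\<in>M. \<forall>b\<in>M. \<forall>c\<in>M. \<forall>j k.
        B (\<alpha> a) (B b c k) j =
          (\<Sum>p\<le>j. sc (of_nat ((k + j - p) choose (j - p))) (B (B a b p) (\<alpha> c) (k + j - p)))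
          + B (\<alpha> b) (B a c j) k)"

text \<open>An element of R_A is represented by its coefficient sequence f :: nat => 'a
  (f i = coefficient of d^i), with finite support. An element of R_A[lambda] is
  P :: nat => nat => 'a, where P j i is the coefficient of lambda^j d^i.\<close>

definition RA :: "(nat \<Rightarrow> 'a::zero) set" where
  "RA = {f. finite {i. f i \<noteq> 0}}"

definition RA_scale :: "(complex \<Rightarrow> 'a \<Rightarrow> 'a) \<Rightarrow> complex \<Rightarrow> (nat \<Rightarrow> 'a) \<Rightarrow> (nat \<Rightarrow> 'a)" where
  "RA_scale sc c f = (\<lambda>i. sc c (f i))"

definition RA_D :: "(nat \<Rightarrow> 'a::zero) \<Rightarrow> (nat \<Rightarrow> 'a)" where
  "RA_D f = (\<lambda>i. if i = 0 then 0 else f (i - 1))"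

definition RA_alpha :: "('a \<Rightarrow> 'a) \<Rightarrow> (nat \<Rightarrow> 'a) \<Rightarrow> (nat \<Rightarrow> 'a)" where
  "RA_alpha \<alpha> f = (\<lambda>i. \<alpha> (f i))"

definition RA_emb :: "'a::zero \<Rightarrow> (nat \<Rightarrow> 'a)" where
  "RA_emb u = (\<lambda>i. if i = 0 then u else 0)"

text \<open>[u_lambda v] = [v,u] + d (v o u) + lambda (v o u + u o v), for u, v in A.\<close>
definition gen_bracket ::
  "('a::ab_group_add \<Rightarrow> 'a \<Rightarrow> 'a) \<Rightarrow> ('a \<Rightarrow> 'a \<Rightarrow> 'a) \<Rightarrow> 'a \<Rightarrow> 'a \<Rightarrow> nat \<Rightarrow> nat \<Rightarrow> 'a" where
  "gen_bracket br circ u v = (\<lambda>j i.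
     if j = 0 \<and> i = 0 then br v u
     else if j = 0 \<and> i = 1 then circ v u
     else if j = 1 \<and> i = 0 then circ v u + circ u v
     else 0)"

text \<open>Multiplication of an element of R_A[lambda] by (-lambda)^p.\<close>
definition neg_lam_pow :: "(complex \<Rightarrow> 'a \<Rightarrow> 'a) \<Rightarrow> nat \<Rightarrow> (nat \<Rightarrow> nat \<Rightarrow> 'a::zero) \<Rightarrow> nat \<Rightarrow> nat \<Rightarrow> 'a" where
  "neg_lam_pow sc p P = (\<lambda>j i. if p \<le> j then sc ((-1) ^ p) (P (j - p) i) else 0)"

text \<open>Multiplication of an element of R_A[lambda] by (d + lambda)^q.\<close>
definition dlam_pow :: "(complex \<Rightarrow> 'a \<Rightarrow> 'a) \<Rightarrow> nat \<Rightarrow> (nat \<Rightarrow> nat \<Rightarrow> 'a::comm_monoid_add) \<Rightarrow> nat \<Rightarrow> nat \<Rightarrow> 'a" where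
  "dlam_pow sc q P = (\<lambda>j i. \<Sum>s\<le>q.
     if s \<le> j \<and> q - s \<le> i then sc (of_nat (q choose s)) (P (j - s) (i - (q - s))) else 0)"

text \<open>[f(d) u_lambda h(d) v] = f(-lambda) h(d+lambda) [u_lambda v], extended bilinearly:
  for a = sum_p d^p u_p and b = sum_q d^q v_q, the bracket is
  sum_{p,q} (-lambda)^p (d+lambda)^q [u_p lambda v_q]. Terms with p > j or q > i + j
  do not contribute to the coefficient of lambda^j d^i.\<close>
definition RA_bracket ::
  "(complex \<Rightarrow> 'a \<Rightarrow> 'a) \<Rightarrow> ('a::ab_group_add \<Rightarrow> 'a \<Rightarrow> 'a) \<Rightarrow> ('a \<Rightarrow> 'a \<Rightarrow> 'a)
     \<Rightarrow> (nat \<Rightarrow> 'a) \<Rightarrow> (nat \<Rightarrow> 'a) \<Rightarrow> nat \<Rightarrow> (nat \<Rightarrow> 'a)" where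
  "RA_bracket sc br circ a b = (\<lambda>j i.
     \<Sum>p\<le>j. \<Sum>q\<le>i + j. neg_lam_pow sc p (dlam_pow sc q (gen_bracket br circ (a p) (b q))) j i)"

text \<open>Degree m of a lambda-bracket on the free module C[d] \<otimes> A: for u, v in A,
  [u_lambda v] = sum_{j \<ge> 0, i + j < m} d^i w_{i,j} lambda^j with w_{i,j} in A.\<close>
definition RA_degree :: "nat \<Rightarrow> ((nat \<Rightarrow> 'a::zero) \<Rightarrow> (nat \<Rightarrow> 'a) \<Rightarrow> nat \<Rightarrow> (nat \<Rightarrow> 'a)) \<Rightarrow> bool" where
  "RA_degree m B \<longleftrightarrow> (\<forall>u v. \<exists>w :: nat \<Rightarrow> nat \<Rightarrow> 'a.
     \<forall>j. B (RA_emb u) (RA_emb v) j = (\<lambda>i. if i + j < m then w i j else 0))"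

end

theory Submission
  imports Defs
begin


locale GD = vector_space sc
  for sc :: "complex \<Rightarrow> 'a::ab_group_add \<Rightarrow> 'a" +
  fixes br circ :: "'a \<Rightarrow> 'a \<Rightarrow> 'a" and \<alpha> :: "'a \<Rightarrow> 'a"
  assumes lin_alpha: "Vector_Spaces.linear sc sc \<alpha>"
    and bil_br: "cbilinear sc br" and bil_circ: "cbilinear sc circ"
begin

lemma lin_props:
  assumes "Vector_Spaces.linear sc sc f"
  shows "f (x + y) = f x + f y" "f (sc c x) = sc c (f x)" "f 0 = 0" "f (-x) = - f x"
    "f (x - y) = f x - f y" "f (sum g A) = (\<Sum>i\<in>A. f (g i))"
proof -
  interpret L: Vector_Spaces.linear sc sc f by fact
  show "f (x + y) = f x + f y" "f (sc c x) = sc c (f x)" "f 0 = 0" "f (-x) = - f x"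
    "f (x - y) = f x - f y" "f (sum g A) = (\<Sum>i\<in>A. f (g i))"
    by (simp_all add: L.add L.scale L.neg L.diff L.sum)
qed

lemmas alpha_props[simp] = lin_props[OF lin_alpha]
lemma br_lin1: "Vector_Spaces.linear sc sc (\<lambda>x. br x y)" using bil_br unfolding cbilinear_def by auto
lemma br_lin2: "Vector_Spaces.linear sc sc (br x)" using bil_br unfolding cbilinear_def by auto
lemma circ_lin1: "Vector_Spaces.linear sc sc (\<lambda>x. circ x y)" using bil_circ unfolding cbilinear_def by auto
lemma circ_lin2: "Vector_Spaces.linear sc sc (circ x)" using bil_circ unfolding cbilinear_def by auto
lemmas br1[simp] = lin_props[OF br_lin1]
lemmas br2[simp] = lin_props[OF br_lin2]
lemmas circ1[simp] = lin_props[OF circ_lin1]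
lemmas circ2[simp] = lin_props[OF circ_lin2]

lemma test: "br (sc c (x + y)) (z - w) = sc c (br x z) + sc c (br y z) - (sc c (br x w) + sc c (br y w))"
  by (simp add: algebra_simps)

end


lemma fsum_apply: "(\<Sum>s\<in>A. F s) i = (\<Sum>s\<in>A. F s i)"
  by (induct A rule: infinite_finite_induct) auto

lemma sum_eq_supp:
  assumes "finite A" "finite B" "\<And>x. x \<in> A - B \<Longrightarrow> f x = 0" "\<And>x. x \<in> B - A \<Longrightarrow> f x = 0"
  shows "sum f A = sum f B"
proof -
  have "sum f A = sum f (A \<inter> B)" by (rule sum.mono_neutral_right) (use assms in auto)
  also have "\<dots> = sum f B" by (rule sum.mono_neutral_left) (use assms in auto)
  finally show ?thesis .
qed

lemma RA_iff: "f \<in> RA \<longleftrightarrow> finite {i. f i \<noteq> 0}" by (simp add: RA_def)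

lemma RA_bounded: "f \<in> RA \<Longrightarrow> \<exists>n. \<forall>i\<ge>n. f i = 0"
  unfolding RA_iff finite_nat_iff_bounded by (metis (mono_tags, lifting) lessThan_iff mem_Collect_eq not_le subset_eq)

lemma RA_fin_subset: "finite S \<Longrightarrow> (\<And>i. i \<notin> S \<Longrightarrow> f i = 0) \<Longrightarrow> f \<in> RA"
  unfolding RA_iff by (metis (mono_tags, lifting) finite_subset mem_Collect_eq subsetI)

lemma RA_zero[simp]: "(\<lambda>i. 0) \<in> RA" by (simp add: RA_iff)
lemma RA_zero'[simp]: "0 \<in> RA" by (simp add: RA_iff)
lemma RA_add[simp]: "(f :: nat \<Rightarrow> 'b::ab_group_add) \<in> RA \<Longrightarrow> g \<in> RA \<Longrightarrow> (\<lambda>i. f i + g i) \<in> RA"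
  by (rule RA_fin_subset[of "{i. f i \<noteq> 0} \<union> {i. g i \<noteq> 0}"]) (auto simp: RA_iff)
lemma RA_add'[simp]: "(f :: nat \<Rightarrow> 'b::ab_group_add) \<in> RA \<Longrightarrow> g \<in> RA \<Longrightarrow> f + g \<in> RA"
  using RA_add[of f g] by (simp add: plus_fun_def)
lemma RA_map: "f \<in> RA \<Longrightarrow> L 0 = 0 \<Longrightarrow> (\<lambda>i. L (f i)) \<in> RA"
  by (rule RA_fin_subset[of "{i. f i \<noteq> 0}"]) (auto simp: RA_iff)
lemma RA_uminus[simp]: "(f :: nat \<Rightarrow> 'b::ab_group_add) \<in> RA \<Longrightarrow> (\<lambda>i. - f i) \<in> RA" by (rule RA_map) auto
lemma RA_sum[simp]: "(\<And>s. s \<in> A \<Longrightarrow> (G s :: nat \<Rightarrow> 'b::ab_group_add) \<in> RA) \<Longrightarrow> (\<lambda>i. \<Sum>s\<in>A. G s i) \<in> RA"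
proof (induct A rule: infinite_finite_induct)
  case (insert x F) then show ?case using RA_add[of "G x"] by simp
qed auto

definition sh :: "nat \<Rightarrow> (nat \<Rightarrow> 'b::zero) \<Rightarrow> nat \<Rightarrow> 'b" where
  "sh t f i = (if t \<le> i then f (i - t) else 0)"

lemma RA_sh[simp]: "f \<in> RA \<Longrightarrow> sh t f \<in> RA"
  by (rule RA_fin_subset[of "(\<lambda>i. i + t) ` {i. f i \<noteq> 0}"]) (auto simp: RA_iff sh_def image_iff intro!: exI[of _ "_ - t"])

context GD begin

definition ev1 :: "(nat \<Rightarrow> 'a) \<Rightarrow> complex \<Rightarrow> 'a" where
  "ev1 f y = (\<Sum>i\<in>{i. f i \<noteq> 0}. sc (y ^ i) (f i))"

lemma ev1_eq: "finite S \<Longrightarrow> (\<And>i. i \<notin> S \<Longrightarrow> f i = 0) \<Longrightarrow> ev1 f y = (\<Sum>i\<in>S. sc (y ^ i) (f i))"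
  unfolding ev1_def by (rule sum.mono_neutral_left) auto

lemma RA_sc[simp]: "f \<in> RA \<Longrightarrow> (\<lambda>i. sc c (f i)) \<in> RA" by (rule RA_map) auto
lemma RA_alpha[simp]: "f \<in> RA \<Longrightarrow> (\<lambda>i. \<alpha> (f i)) \<in> RA" by (rule RA_map) auto

lemma ev1_add: "f \<in> RA \<Longrightarrow> g \<in> RA \<Longrightarrow> ev1 (\<lambda>i. f i + g i) y = ev1 f y + ev1 g y"
  apply (subst (1 2 3) ev1_eq[of "{i. f i \<noteq> 0} \<union> {i. g i \<noteq> 0}"])
  by (auto simp: RA_iff sum.distrib scale_right_distrib)

lemma ev1_lin: "Vector_Spaces.linear sc sc L \<Longrightarrow> f \<in> RA \<Longrightarrow> ev1 (\<lambda>i. L (f i)) y = L (ev1 f y)"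
  apply (subst (1 2) ev1_eq[of "{i. f i \<noteq> 0}"])
  by (auto simp: RA_iff lin_props)

lemma ev1_sc: "f \<in> RA \<Longrightarrow> ev1 (\<lambda>i. sc c (f i)) y = sc c (ev1 f y)"
  apply (subst (1 2) ev1_eq[of "{i. f i \<noteq> 0}"])
  by (auto simp: RA_iff scale_sum_right mult.commute)

lemma ev1_uminus: "f \<in> RA \<Longrightarrow> ev1 (\<lambda>i. - f i) y = - ev1 f y"
  apply (subst (1 2) ev1_eq[of "{i. f i \<noteq> 0}"])
  by (auto simp: RA_iff sum_negf)

lemma ev1_zero[simp]: "ev1 (\<lambda>i. 0) y = 0" by (simp add: ev1_def)
lemma ev1_zero'[simp]: "ev1 0 y = 0" by (simp add: ev1_def)

lemma ev1_sum: "finite A \<Longrightarrow> (\<And>s. s \<in> A \<Longrightarrow> F s \<in> RA) \<Longrightarrow> ev1 (\<lambda>i. \<Sum>s\<in>A. F s i) y = (\<Sum>s\<in>A. ev1 (F s) y)"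
proof (induct A rule: finite_induct)
  case (insert x A)
  then show ?case using ev1_add[of "F x" "\<lambda>i. \<Sum>s\<in>A. F s i"] by simp
qed simp

lemma ev1_sh: "f \<in> RA \<Longrightarrow> ev1 (sh t f) y = sc (y ^ t) (ev1 f y)"
proof -
  assume f: "f \<in> RA"
  let ?S = "{i. f i \<noteq> 0}"
  have "ev1 (sh t f) y = (\<Sum>i\<in>(\<lambda>i. i + t) ` ?S. sc (y ^ i) (sh t f i))"
    by (rule ev1_eq) (use f in \<open>auto simp: RA_iff sh_def image_iff intro!: exI[of _ "_ - t"]\<close>)
  also have "\<dots> = (\<Sum>i\<in>?S. sc (y ^ (i + t)) (f i))"
    by (subst sum.reindex) (auto simp: sh_def)
  also have "\<dots> = sc (y ^ t) (ev1 f y)"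
    by (simp add: ev1_def scale_sum_right power_add mult.commute)
  finally show ?thesis .
qed

lemma ev1_emb[simp]: "ev1 (RA_emb u) y = u"
  by (subst ev1_eq[of "{0}"]) (auto simp: RA_emb_def)

lemma poly_zero_aux:
  "\<forall>f. (\<forall>i\<ge>n. f i = 0) \<longrightarrow> (\<forall>y. (\<Sum>i<n. sc (y ^ i) (f i)) = 0) \<longrightarrow> (\<forall>i. f i = 0)"
proof (induct n)
  case 0 then show ?case by auto
next
  case (Suc n)
  show ?case
  proof (intro allI impI)
    fix f :: "nat \<Rightarrow> 'a" and i
    assume z: "\<forall>i\<ge>Suc n. f i = 0" and H: "\<forall>y. (\<Sum>i<Suc n. sc (y ^ i) (f i)) = 0"
    define g where "g i = (if i < n then sc ((2::complex) ^ i - 2 ^ n) (f i) else 0)" for i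
    have "\<forall>y. (\<Sum>i<n. sc (y ^ i) (g i)) = 0"
    proof
      fix y :: complex
      have h1: "(\<Sum>i<n. sc (y ^ i) (f i)) + sc (y ^ n) (f n) = 0" using H[rule_format, of y] by simp
      have h2: "(\<Sum>i<n. sc ((2*y) ^ i) (f i)) + sc ((2*y) ^ n) (f n) = 0" using H[rule_format, of "2*y"] by simp
      have "(\<Sum>i<n. sc (y ^ i) (g i)) = (\<Sum>i<n. sc ((2*y) ^ i) (f i)) - sc (2 ^ n) (\<Sum>i<n. sc (y ^ i) (f i))"
        by (simp add: g_def scale_sum_right sum_subtractf[symmetric] algebra_simps power_mult_distrib)
      also have "\<dots> = - sc ((2*y) ^ n) (f n) + sc (2 ^ n) (sc (y ^ n) (f n))"
        using h1 h2 by (simp add: eq_neg_iff_add_eq_0[symmetric] add_eq_0_iff2 algebra_simps)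
      also have "\<dots> = 0" by (simp add: power_mult_distrib)
      finally show "(\<Sum>i<n. sc (y ^ i) (g i)) = 0" .
    qed
    moreover have "\<forall>i\<ge>n. g i = 0" by (simp add: g_def)
    ultimately have g0: "\<forall>i. g i = 0" using Suc by blast
    have lt: "\<And>i. i < n \<Longrightarrow> f i = 0"
    proof -
      fix i assume "i < n"
      hence "(2::nat) ^ i \<noteq> 2 ^ n" by simp
      hence "(2::complex) ^ i \<noteq> 2 ^ n" by (metis of_nat_eq_iff of_nat_numeral of_nat_power)
      with g0[rule_format, of i] \<open>i < n\<close> show "f i = 0" by (simp add: g_def)
    qed
    have "f n = 0" using H[rule_format, of 1] lt by simp
    then show "f i = 0" using z lt by (cases "i < n"; cases "i = n") auto
  qed
qed

lemma ev1_inj0: "f \<in> RA \<Longrightarrow> (\<And>y. ev1 f y = 0) \<Longrightarrow> f i = 0"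
proof -
  assume f: "f \<in> RA" and H: "\<And>y. ev1 f y = 0"
  obtain n where n: "\<forall>i\<ge>n. f i = 0" using RA_bounded[OF f] by auto
  have "\<forall>y. (\<Sum>i<n. sc (y ^ i) (f i)) = 0" using H ev1_eq[of "{..<n}" f] n by auto
  then show "f i = 0" using poly_zero_aux n by blast
qed

end


definition fin2 :: "(nat \<Rightarrow> nat \<Rightarrow> 'b::zero) \<Rightarrow> bool" where
  "fin2 P \<longleftrightarrow> finite {j. P j \<noteq> 0} \<and> (\<forall>j. P j \<in> RA)"

definition sh2 :: "nat \<Rightarrow> nat \<Rightarrow> (nat \<Rightarrow> nat \<Rightarrow> 'b::zero) \<Rightarrow> nat \<Rightarrow> nat \<Rightarrow> 'b" where
  "sh2 s t P = sh s (\<lambda>j. sh t (P j))"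

lemma fin2_fin_subset: "finite J \<Longrightarrow> (\<And>j. j \<notin> J \<Longrightarrow> P j = 0) \<Longrightarrow> (\<And>j. P j \<in> RA) \<Longrightarrow> fin2 P"
  unfolding fin2_def by (metis (mono_tags, lifting) finite_subset mem_Collect_eq subsetI)

lemma fin2_add[simp]: "fin2 P \<Longrightarrow> fin2 Q \<Longrightarrow> fin2 (\<lambda>j i. P j i + (Q j i :: 'b::ab_group_add))"
  apply (rule fin2_fin_subset[of "{j. P j \<noteq> 0} \<union> {j. Q j \<noteq> 0}"])
   apply (auto simp: fin2_def)
  done

lemma fin2_map: "fin2 P \<Longrightarrow> L 0 = 0 \<Longrightarrow> fin2 (\<lambda>j i. L (P j i))"
  apply (rule fin2_fin_subset[of "{j. P j \<noteq> 0}"])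
    apply (auto simp: fin2_def RA_map)
  done

lemma fin2_sum[simp]: "(\<And>s. s \<in> A \<Longrightarrow> fin2 (G s)) \<Longrightarrow> fin2 (\<lambda>j i. \<Sum>s\<in>A. (G s j i :: 'b::ab_group_add))"
proof (induct A rule: infinite_finite_induct)
  case (infinite A)
  then show ?case by (simp add: fin2_def zero_fun_def)
next
  case empty
  then show ?case by (simp add: fin2_def zero_fun_def)
next
  case (insert x F) then show ?case using fin2_add[of "G x"] by simp
qed

lemma sh2_apply: "sh2 s t P j = (if s \<le> j then sh t (P (j - s)) else 0)"
  by (simp add: sh2_def sh_def)

lemma sh_zero[simp]: "sh t 0 = 0" by (simp add: sh_def fun_eq_iff)

lemma fin2_sh2[simp]: "fin2 P \<Longrightarrow> fin2 (sh2 s t P)"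
proof (rule fin2_fin_subset[of "(\<lambda>j. j + s) ` {j. P j \<noteq> 0}"])
  assume P: "fin2 P"
  then show "finite ((\<lambda>j. j + s) ` {j. P j \<noteq> 0})" by (simp add: fin2_def)
  fix j
  show "sh2 s t P j \<in> RA" using P by (simp add: sh2_apply fin2_def)
  assume j: "j \<notin> (\<lambda>j. j + s) ` {j. P j \<noteq> 0}"
  show "sh2 s t P j = 0"
  proof (cases "s \<le> j")
    case True
    then have "j = (j - s) + s" by simp
    then have "P (j - s) = 0" using j by (metis (mono_tags, lifting) image_eqI mem_Collect_eq)
    then show ?thesis using True by (simp add: sh2_apply)
  qed (simp add: sh2_apply)
qed

context GD begin

lemma vs: "vector_space sc" using vector_space_assms unfolding vector_space_def by blast

definition ev2 :: "(nat \<Rightarrow> nat \<Rightarrow> 'a) \<Rightarrow> complex \<Rightarrow> complex \<Rightarrow> 'a" where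
  "ev2 P x y = ev1 (\<lambda>j. ev1 (P j) y) x"

lemma fin2_sc[simp]: "fin2 (P :: nat \<Rightarrow> nat \<Rightarrow> 'a) \<Longrightarrow> fin2 (\<lambda>j i. sc c (P j i))" by (rule fin2_map[of P "sc c"]) simp_all
lemma fin2_uminus[simp]: "fin2 (P :: nat \<Rightarrow> nat \<Rightarrow> 'a) \<Longrightarrow> fin2 (\<lambda>j i. - P j i)" by (rule fin2_map[of P uminus]) simp_all

lemma ev1_inner_RA: "fin2 P \<Longrightarrow> (\<lambda>j. ev1 (P j) y) \<in> RA"
  by (rule RA_fin_subset[of "{j. P j \<noteq> 0}"]) (auto simp: fin2_def)

lemma ev2_add: "fin2 P \<Longrightarrow> fin2 Q \<Longrightarrow> ev2 (\<lambda>j i. P j i + Q j i) x y = ev2 P x y + ev2 Q x y"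
  unfolding ev2_def
  by (subst ev1_add, auto simp: fin2_def intro!: ev1_add ev1_inner_RA)

lemma ev2_sc: "fin2 P \<Longrightarrow> ev2 (\<lambda>j i. sc c (P j i)) x y = sc c (ev2 P x y)"
  unfolding ev2_def
  by (subst ev1_sc, auto simp: fin2_def intro!: ev1_sc ev1_inner_RA)

lemma ev2_uminus: "fin2 P \<Longrightarrow> ev2 (\<lambda>j i. - P j i) x y = - ev2 P x y"
  unfolding ev2_def
  by (subst ev1_uminus, auto simp: fin2_def intro!: ev1_uminus ev1_inner_RA)

lemma ev2_sum: "finite A \<Longrightarrow> (\<And>s. s \<in> A \<Longrightarrow> fin2 (G s)) \<Longrightarrow> ev2 (\<lambda>j i. \<Sum>s\<in>A. G s j i) x y = (\<Sum>s\<in>A. ev2 (G s) x y)"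
proof (induct A rule: finite_induct)
  case empty then show ?case by (simp add: ev2_def)
next
  case (insert a A)
  then show ?case using ev2_add[of "G a" "\<lambda>j i. \<Sum>s\<in>A. G s j i"] by simp
qed

lemma ev2_sh2: "fin2 P \<Longrightarrow> ev2 (sh2 s t P) x y = sc (x ^ s * y ^ t) (ev2 P x y)"
proof -
  assume P: "fin2 P"
  have "(\<lambda>j. ev1 (sh2 s t P j) y) = sh s (\<lambda>j. sc (y ^ t) (ev1 (P j) y))"
    using P by (auto simp: sh2_def sh_def fin2_def ev1_sh zero_fun_def[symmetric])
  then show ?thesis using P
    by (simp add: ev2_def ev1_sh ev1_sc ev1_inner_RA mult.commute)
qed

lemma ev2_inj0: "fin2 P \<Longrightarrow> (\<And>x y. ev2 P x y = 0) \<Longrightarrow> P = (\<lambda>j i. 0)"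
proof -
  assume P: "fin2 P" and H: "\<And>x y. ev2 P x y = 0"
  have "\<And>j y. ev1 (P j) y = 0"
    using ev1_inj0[OF ev1_inner_RA[OF P]] H unfolding ev2_def by blast
  then have "\<And>j i. P j i = 0" using ev1_inj0 P unfolding fin2_def by blast
  then show ?thesis by auto
qed

lemma ev2_inj: "fin2 P \<Longrightarrow> fin2 Q \<Longrightarrow> (\<And>x y. ev2 P x y = ev2 Q x y) \<Longrightarrow> P = Q"
proof -
  assume P: "fin2 P" and Q: "fin2 Q" and H: "\<And>x y. ev2 P x y = ev2 Q x y"
  have e: "ev2 (\<lambda>j i. P j i + - Q j i) x y = 0" for x y
  proof -
    have "ev2 (\<lambda>j i. P j i + - Q j i) x y = ev2 P x y + ev2 (\<lambda>j i. - Q j i) x y"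
      by (rule ev2_add[OF P fin2_uminus[OF Q]])
    also have "\<dots> = 0" by (simp add: ev2_uminus[OF Q] H)
    finally show ?thesis .
  qed
  have "(\<lambda>j i. P j i + - Q j i) = (\<lambda>j i. 0)"
    by (rule ev2_inj0[OF fin2_add[OF P fin2_uminus[OF Q]] e])
  note h = this
  show "P = Q"
  proof (intro ext)
    fix j i
    show "P j i = Q j i" using fun_cong[OF fun_cong[OF h, of j], of i] by simp
  qed
qed

definition \<Phi> :: "'a \<Rightarrow> 'a \<Rightarrow> complex \<Rightarrow> complex \<Rightarrow> 'a" where
  "\<Phi> u v x y = br v u + sc y (circ v u) + sc x (circ v u + circ u v)"

lemma Phi_lin1: "Vector_Spaces.linear sc sc (\<lambda>u. \<Phi> u v x y)"
  unfolding Vector_Spaces.linear_iff using vs by (auto simp: \<Phi>_def algebra_simps)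
lemma Phi_lin2: "Vector_Spaces.linear sc sc (\<lambda>v. \<Phi> u v x y)"
  unfolding Vector_Spaces.linear_iff using vs by (auto simp: \<Phi>_def algebra_simps)
lemmas Phi1 = lin_props[OF Phi_lin1]
lemmas Phi2 = lin_props[OF Phi_lin2]

definition G :: "'a \<Rightarrow> 'a \<Rightarrow> nat \<Rightarrow> nat \<Rightarrow> 'a" where "G = gen_bracket br circ"

lemma G_RA[simp]: "G u v j \<in> RA"
  apply (rule RA_fin_subset[of "{0,1}"])
   apply simp
  apply (simp add: G_def gen_bracket_def)
  done

lemma fin2_G[simp]: "fin2 (G u v)"
  apply (rule fin2_fin_subset[of "{0,1}"])
    apply simp
   apply (simp add: G_def gen_bracket_def fun_eq_iff)
  apply simp
  done

lemma ev2_G: "ev2 (G u v) x y = \<Phi> u v x y"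
proof -
  have e0: "ev1 (G u v 0) y = br v u + sc y (circ v u)"
    by (subst ev1_eq[of "{0,1}"]) (simp_all add: G_def gen_bracket_def)
  have e1: "ev1 (G u v (Suc 0)) y = circ v u + circ u v"
    by (subst ev1_eq[of "{0}"]) (simp_all add: G_def gen_bracket_def)
  have e2: "\<And>j. j \<notin> {0,1} \<Longrightarrow> G u v j = (\<lambda>i. 0)"
    by (simp add: G_def gen_bracket_def fun_eq_iff)
  show ?thesis unfolding ev2_def
    by (subst ev1_eq[of "{0,1}" "\<lambda>j. ev1 (G u v j) y"]) (simp_all add: \<Phi>_def e0 e1 e2)
qed

lemma G_zero1[simp]: "G 0 v = (\<lambda>j i. 0)" by (auto simp: G_def gen_bracket_def fun_eq_iff)
lemma G_zero2[simp]: "G u 0 = (\<lambda>j i. 0)" by (auto simp: G_def gen_bracket_def fun_eq_iff)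

lemma neg_lam_pow_sh2: "neg_lam_pow sc p P = (\<lambda>j i. sc ((-1) ^ p) (sh2 p 0 P j i))"
  by (auto simp: neg_lam_pow_def sh2_def sh_def)
lemma dlam_pow_sh2: "dlam_pow sc q P = (\<lambda>j i. \<Sum>s\<le>q. sc (of_nat (q choose s)) (sh2 s (q - s) P j i))"
  by (auto simp: dlam_pow_def sh2_def sh_def fun_eq_iff intro!: sum.cong)

lemma fin2_neg[simp]: "fin2 P \<Longrightarrow> fin2 (neg_lam_pow sc p P)"
  unfolding neg_lam_pow_sh2 by simp
lemma fin2_dlam[simp]: "fin2 P \<Longrightarrow> fin2 (dlam_pow sc q P)"
  unfolding dlam_pow_sh2 by (rule fin2_sum) simp

lemma ev2_neg: "fin2 P \<Longrightarrow> ev2 (neg_lam_pow sc p P) x y = sc ((- x) ^ p) (ev2 P x y)"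
  unfolding neg_lam_pow_sh2 by (simp add: ev2_sc ev2_sh2 power_minus[of x p])

lemma ev2_dlam: "fin2 P \<Longrightarrow> ev2 (dlam_pow sc q P) x y = sc ((x + y) ^ q) (ev2 P x y)"
  unfolding dlam_pow_sh2
  by (simp add: ev2_sum ev2_sc ev2_sh2 binomial_ring scale_sum_left mult.assoc)

end


lemma RA_D_sh: "RA_D a = sh 1 a" by (auto simp: RA_D_def sh_def fun_eq_iff)
lemma RA_D_pow: "(RA_D ^^ m) a = sh m a"
proof (induct m)
  case 0 then show ?case by (simp add: sh_def fun_eq_iff)
next
  case (Suc m) then show ?case by (auto simp: RA_D_sh sh_def fun_eq_iff)
qed
lemma RA_D_RA[simp]: "a \<in> RA \<Longrightarrow> RA_D a \<in> RA" by (simp add: RA_D_sh)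
lemma RA_emb_RA[simp]: "RA_emb u \<in> RA" by (rule RA_fin_subset[of "{0}"]) (auto simp: RA_emb_def)

context GD begin

lemma RA_alpha_RA[simp]: "a \<in> RA \<Longrightarrow> RA_alpha \<alpha> a \<in> RA" by (simp add: RA_alpha_def)
lemma RA_scale_RA[simp]: "a \<in> RA \<Longrightarrow> RA_scale sc c a \<in> RA" by (simp add: RA_scale_def)

lemma ev1_D: "a \<in> RA \<Longrightarrow> ev1 (RA_D a) y = sc y (ev1 a y)" by (simp add: RA_D_sh ev1_sh)
lemma ev1_D_pow: "a \<in> RA \<Longrightarrow> ev1 ((RA_D ^^ m) a) y = sc (y ^ m) (ev1 a y)" by (simp add: RA_D_pow ev1_sh)
lemma ev1_alpha: "a \<in> RA \<Longrightarrow> ev1 (RA_alpha \<alpha> a) y = \<alpha> (ev1 a y)"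
  unfolding RA_alpha_def by (rule ev1_lin[OF lin_alpha])
lemma ev1_scale: "a \<in> RA \<Longrightarrow> ev1 (RA_scale sc c a) y = sc c (ev1 a y)"
  unfolding RA_scale_def by (rule ev1_sc)

definition T :: "(nat \<Rightarrow> 'a) \<Rightarrow> (nat \<Rightarrow> 'a) \<Rightarrow> nat \<Rightarrow> nat \<Rightarrow> nat \<Rightarrow> nat \<Rightarrow> 'a" where
  "T a b p q = neg_lam_pow sc p (dlam_pow sc q (G (a p) (b q)))"

lemma dlam_zero[simp]: "dlam_pow sc q (\<lambda>j i. 0) = (\<lambda>j i. 0)" by (simp add: dlam_pow_def fun_eq_iff cong: if_cong)
lemma neg_zero[simp]: "neg_lam_pow sc p (\<lambda>j i. 0) = (\<lambda>j i. 0)" by (simp add: neg_lam_pow_def fun_eq_iff)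

lemma T_zero_a: "a p = 0 \<Longrightarrow> T a b p q j i = 0" by (simp add: T_def)
lemma T_zero_b: "b q = 0 \<Longrightarrow> T a b p q j i = 0" by (simp add: T_def)
lemma T_zero_p: "j < p \<Longrightarrow> T a b p q j i = 0" by (simp add: T_def neg_lam_pow_def)
lemma T_zero_q: "i + j < q \<Longrightarrow> T a b p q j i = 0"
proof -
  assume q: "i + j < q"
  have "\<forall>s\<in>{..q}. \<not> (s \<le> j - p \<and> q - s \<le> i)" using q by auto
  then have "dlam_pow sc q (G (a p) (b q)) (j - p) i = 0"
    unfolding dlam_pow_def by (intro sum.neutral) auto
  then show ?thesis by (simp add: T_def neg_lam_pow_def)
qed

lemma B_expand:
  assumes a: "\<forall>p\<ge>Na. a p = 0" and b: "\<forall>q\<ge>Nb. b q = 0"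
  shows "RA_bracket sc br circ a b j i = (\<Sum>p<Na. \<Sum>q<Nb. T a b p q j i)"
proof -
  have inner: "(\<Sum>q\<le>i + j. T a b p q j i) = (\<Sum>q<Nb. T a b p q j i)" for p
    by (rule sum_eq_supp) (use b in \<open>auto intro: T_zero_b T_zero_q\<close>)
  have "RA_bracket sc br circ a b j i = (\<Sum>p\<le>j. \<Sum>q\<le>i + j. T a b p q j i)"
    by (simp add: RA_bracket_def T_def G_def)
  also have "\<dots> = (\<Sum>p\<le>j. \<Sum>q<Nb. T a b p q j i)" by (simp add: inner)
  also have "\<dots> = (\<Sum>p<Na. \<Sum>q<Nb. T a b p q j i)"
    by (rule sum_eq_supp) (use a in \<open>auto intro!: sum.neutral intro: T_zero_a T_zero_p\<close>)
  finally show ?thesis .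
qed

lemma B_fun:
  assumes "\<forall>p\<ge>Na. a p = 0" and "\<forall>q\<ge>Nb. b q = 0"
  shows "RA_bracket sc br circ a b = (\<lambda>j i. \<Sum>p<Na. \<Sum>q<Nb. T a b p q j i)"
  using B_expand[OF assms] by (intro ext) simp

lemma fin2_T[simp]: "fin2 (T a b p q)" by (simp add: T_def)

lemma fin2_B[simp]: "a \<in> RA \<Longrightarrow> b \<in> RA \<Longrightarrow> fin2 (RA_bracket sc br circ a b)"
proof -
  assume "a \<in> RA" "b \<in> RA"
  then obtain Na Nb where "\<forall>p\<ge>Na. a p = 0" "\<forall>q\<ge>Nb. b q = 0" using RA_bounded by metis
  then show ?thesis by (simp add: B_fun)
qed

lemma B_RA[simp]: "a \<in> RA \<Longrightarrow> b \<in> RA \<Longrightarrow> RA_bracket sc br circ a b j \<in> RA"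
  using fin2_B unfolding fin2_def by blast

lemma ev2_T: "ev2 (T a b p q) x y = sc ((- x) ^ p * (x + y) ^ q) (\<Phi> (a p) (b q) x y)"
  by (simp add: T_def ev2_neg ev2_dlam ev2_G)

lemma B_ev:
  assumes "a \<in> RA" "b \<in> RA"
  shows "ev2 (RA_bracket sc br circ a b) x y = \<Phi> (ev1 a (- x)) (ev1 b (y + x)) x y"
proof -
  obtain Na Nb where a: "\<forall>p\<ge>Na. a p = 0" and b: "\<forall>q\<ge>Nb. b q = 0" using assms RA_bounded by metis
  have ea: "ev1 a (- x) = (\<Sum>p<Na. sc ((- x) ^ p) (a p))"
    by (rule ev1_eq) (use a in auto)
  have eb: "ev1 b (y + x) = (\<Sum>q<Nb. sc ((x + y) ^ q) (b q))"
    by (subst ev1_eq[of "{..<Nb}"]) (use b in \<open>auto simp: add.commute\<close>)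
  have "ev2 (RA_bracket sc br circ a b) x y = (\<Sum>p<Na. \<Sum>q<Nb. ev2 (T a b p q) x y)"
    by (simp add: B_fun[OF a b] ev2_sum)
  also have "\<dots> = (\<Sum>p<Na. \<Sum>q<Nb. sc ((- x) ^ p * (x + y) ^ q) (\<Phi> (a p) (b q) x y))"
    by (simp add: ev2_T)
  also have "\<dots> = \<Phi> (ev1 a (- x)) (ev1 b (y + x)) x y"
    unfolding ea eb apply (simp add: Phi1 Phi2 scale_sum_right mult.commute)
    by (rule sum.swap)
  finally show ?thesis .
qed

end


lemma sh_0[simp]: "sh 0 f = f" by (simp add: sh_def fun_eq_iff)

context GD begin

abbreviation BB where "BB \<equiv> RA_bracket sc br circ"

lemma ev1_inj: "f \<in> RA \<Longrightarrow> g \<in> RA \<Longrightarrow> (\<And>y. ev1 f y = ev1 g y) \<Longrightarrow> f = g"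
proof -
  assume f: "f \<in> RA" and g: "g \<in> RA" and H: "\<And>y. ev1 f y = ev1 g y"
  have e: "ev1 (\<lambda>i. f i + - g i) y = 0" for y
    using ev1_add[OF f RA_uminus[OF g]] ev1_uminus[OF g] H by simp
  show "f = g"
  proof
    fix i
    have "f i + - g i = 0" by (rule ev1_inj0[OF RA_add[OF f RA_uminus[OF g]] e])
    then show "f i = g i" by simp
  qed
qed

lemma plus_lam: "(f :: nat \<Rightarrow> 'a) + g = (\<lambda>i. f i + g i)" by (simp add: fun_eq_iff)

lemma B_add1:
  assumes "a \<in> RA" "b \<in> RA" "c \<in> RA"
  shows "BB (a + b) c j = BB a c j + BB b c j"
proof -
  have "BB (a + b) c = (\<lambda>j i. BB a c j i + BB b c j i)"
    by (rule ev2_inj) (use assms in \<open>simp_all add: B_ev ev2_add plus_lam ev1_add Phi1\<close>)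
  then show ?thesis by (simp add: fun_eq_iff)
qed

lemma B_add2:
  assumes "a \<in> RA" "b \<in> RA" "c \<in> RA"
  shows "BB c (a + b) j = BB c a j + BB c b j"
proof -
  have "BB c (a + b) = (\<lambda>j i. BB c a j i + BB c b j i)"
    by (rule ev2_inj) (use assms in \<open>simp_all add: B_ev ev2_add plus_lam ev1_add Phi2\<close>)
  then show ?thesis by (simp add: fun_eq_iff)
qed

lemma B_scale1:
  assumes "a \<in> RA" "b \<in> RA"
  shows "BB (RA_scale sc z a) b j = RA_scale sc z (BB a b j)"
proof -
  have "BB (RA_scale sc z a) b = (\<lambda>j i. sc z (BB a b j i))"
    by (rule ev2_inj) (use assms in \<open>simp_all add: B_ev ev2_sc ev1_scale Phi1\<close>)
  then show ?thesis by (simp add: fun_eq_iff RA_scale_def)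
qed

lemma B_scale2:
  assumes "a \<in> RA" "b \<in> RA"
  shows "BB a (RA_scale sc z b) j = RA_scale sc z (BB a b j)"
proof -
  have "BB a (RA_scale sc z b) = (\<lambda>j i. sc z (BB a b j i))"
    by (rule ev2_inj) (use assms in \<open>simp_all add: B_ev ev2_sc ev1_scale Phi2\<close>)
  then show ?thesis by (simp add: fun_eq_iff RA_scale_def)
qed

lemma B_D:
  assumes a: "a \<in> RA" and b: "b \<in> RA"
  shows "BB (RA_D a) b j = (if j = 0 then 0 else - BB a b (j - 1))"
proof -
  have fam: "(\<lambda>j. if j = 0 then 0 else - BB a b (j - 1)) = sh2 1 0 (\<lambda>j i. - BB a b j i)"
    by (auto simp: sh2_apply fun_eq_iff)
  have "BB (RA_D a) b = sh2 1 0 (\<lambda>j i. - BB a b j i)"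
    by (rule ev2_inj) (use a b in \<open>simp_all add: B_ev ev2_sh2 ev2_uminus ev1_D Phi1\<close>)
  then have "BB (RA_D a) b = (\<lambda>j. if j = 0 then 0 else - BB a b (j - 1))" using fam by simp
  from fun_cong[OF this, of j] show ?thesis by simp
qed

definition skewR :: "(nat \<Rightarrow> nat \<Rightarrow> 'a) \<Rightarrow> nat \<Rightarrow> nat \<Rightarrow> 'a" where
  "skewR Q k = - (\<Sum>j\<in>{j. Q j \<noteq> 0}. RA_scale sc ((-1) ^ j * of_nat (j choose k)) ((RA_D ^^ (j - k)) (Q j)))"

lemma skewR_apply: "skewR Q k i = - (\<Sum>j\<in>{j. Q j \<noteq> 0}. sc ((-1) ^ j * of_nat (j choose k)) (sh (j - k) (Q j) i))"
  by (simp add: skewR_def fsum_apply RA_scale_def RA_D_pow)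

lemma skewR_fun: "skewR Q k = (\<lambda>i. - (\<Sum>j\<in>{j. Q j \<noteq> 0}. sc ((-1) ^ j * of_nat (j choose k)) (sh (j - k) (Q j) i)))"
  by (simp add: skewR_apply fun_eq_iff)

lemma skew_main:
  assumes Q: "fin2 Q"
  shows "fin2 (skewR Q) \<and> ev2 (skewR Q) x y = - ev2 Q (- x - y) y"
proof -
  define J where "J = {j. Q j \<noteq> 0}"
  have J: "finite J" using Q by (simp add: fin2_def J_def)
  then obtain M where M: "J \<subseteq> {..<M}" using finite_nat_iff_bounded by blast
  have QRA: "Q j \<in> RA" for j using Q by (simp add: fin2_def)
  have z: "skewR Q k = 0" if "M \<le> k" for k
  proof -
    have jk: "\<forall>j\<in>J. j < k" using M that by auto
    have "skewR Q k i = 0" for i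
    proof -
      have "(\<Sum>j\<in>J. sc ((-1) ^ j * of_nat (j choose k)) (sh (j - k) (Q j) i)) = 0"
        by (rule sum.neutral) (use jk in auto)
      then show ?thesis unfolding skewR_apply J_def[symmetric] by simp
    qed
    then show ?thesis by (simp add: fun_eq_iff)
  qed
  have RAk: "skewR Q k \<in> RA" for k
    unfolding skewR_fun using QRA by (intro RA_uminus RA_sum RA_sc RA_sh)
  have f2: "fin2 (skewR Q)"
    by (rule fin2_fin_subset[of "{..<M}"]) (use z RAk in auto)
  define V where "V j = ev1 (Q j) y" for j
  have ek: "ev1 (skewR Q k) y = - (\<Sum>j\<in>J. sc ((-1) ^ j * of_nat (j choose k) * y ^ (j - k)) (V j))" for k
    unfolding skewR_fun J_def[symmetric] V_def
    using QRA J by (simp add: ev1_uminus ev1_sum ev1_sc ev1_sh)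
  have coef: "(\<Sum>k<M. x ^ k * ((-1) ^ j * of_nat (j choose k) * y ^ (j - k))) = (- x - y) ^ j" if "j \<in> J" for j
  proof -
    have jM: "j < M" using M that by auto
    have "(\<Sum>k<M. x ^ k * ((-1) ^ j * of_nat (j choose k) * y ^ (j - k)))
        = (\<Sum>k\<le>j. x ^ k * ((-1) ^ j * of_nat (j choose k) * y ^ (j - k)))"
      by (rule sum_eq_supp) (use jM in auto)
    also have "\<dots> = (-1) ^ j * (\<Sum>k\<le>j. of_nat (j choose k) * x ^ k * y ^ (j - k))"
      by (simp add: sum_distrib_left algebra_simps)
    also have "\<dots> = (-1) ^ j * (x + y) ^ j" by (simp add: binomial_ring)
    also have "\<dots> = (- x - y) ^ j" by (simp add: power_mult_distrib[symmetric])
    finally show ?thesis .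
  qed
  have "ev2 (skewR Q) x y = (\<Sum>k<M. sc (x ^ k) (ev1 (skewR Q k) y))"
    unfolding ev2_def by (rule ev1_eq) (use z in auto)
  also have "\<dots> = - (\<Sum>k<M. \<Sum>j\<in>J. sc (x ^ k * ((-1) ^ j * of_nat (j choose k) * y ^ (j - k))) (V j))"
    by (simp add: ek scale_sum_right sum_negf)
  also have "\<dots> = - (\<Sum>j\<in>J. sc (\<Sum>k<M. x ^ k * ((-1) ^ j * of_nat (j choose k) * y ^ (j - k))) (V j))"
    by (subst sum.swap) (simp add: scale_sum_left)
  also have "\<dots> = - (\<Sum>j\<in>J. sc ((- x - y) ^ j) (V j))"
    by (simp add: coef)
  also have "\<dots> = - ev2 Q (- x - y) y"
    unfolding ev2_def V_def by (subst ev1_eq[of J "\<lambda>j. ev1 (Q j) y" "- x - y"]) (use J in \<open>simp_all add: J_def\<close>)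
  finally show ?thesis using f2 by simp
qed

lemma B_emb: "BB (RA_emb u) (RA_emb v) = G u v"
  by (rule ev2_inj) (simp_all add: B_ev ev2_G)

end


lemma finite_tri[simp]: "finite {(p, t). p + t < (n::nat)}"
  by (rule finite_subset[of _ "{..<n} \<times> {..<n}"]) auto

context GD begin

lemma CL:
  assumes w: "\<And>p r. N \<le> p \<or> N \<le> r \<Longrightarrow> w p r = 0"
  shows "ev1 (\<lambda>j. ev1 (\<lambda>k. \<Sum>p\<le>j. sc (of_nat ((k + j - p) choose (j - p))) (w p (k + j - p))) z) x
       = ev1 (\<lambda>p. ev1 (w p) (x + z)) x"
proof -
  define H where "H p t k = sc (of_nat ((k + t) choose t) * x ^ (p + t) * z ^ k) (w p (k + t))" for p t k
  define g where "g j p = (\<Sum>k<N. sc (x ^ j * z ^ k * of_nat ((k + j - p) choose (j - p))) (w p (k + j - p)))" for j p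
  have inner: "ev1 (\<lambda>k. \<Sum>p\<le>j. sc (of_nat ((k + j - p) choose (j - p))) (w p (k + j - p))) z
      = (\<Sum>k<N. sc (z ^ k) (\<Sum>p\<le>j. sc (of_nat ((k + j - p) choose (j - p))) (w p (k + j - p))))" for j
    by (rule ev1_eq) (auto intro!: sum.neutral w)
  have outer0: "(\<Sum>k<N. sc (z ^ k) (\<Sum>p\<le>j. sc (of_nat ((k + j - p) choose (j - p))) (w p (k + j - p)))) = 0"
    if "j \<notin> {..<2*N}" for j
  proof -
    have "w p (k + j - p) = 0" if "p \<le> j" for p k
    proof (cases "N \<le> p")
      case False
      then show ?thesis using \<open>j \<notin> {..<2*N}\<close> \<open>p \<le> j\<close> by (intro w) auto
    qed (simp add: w)
    then show ?thesis by simp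
  qed
  have "ev1 (\<lambda>j. ev1 (\<lambda>k. \<Sum>p\<le>j. sc (of_nat ((k + j - p) choose (j - p))) (w p (k + j - p))) z) x
      = (\<Sum>j<2*N. sc (x ^ j) (\<Sum>k<N. sc (z ^ k) (\<Sum>p\<le>j. sc (of_nat ((k + j - p) choose (j - p))) (w p (k + j - p)))))"
    unfolding inner by (rule ev1_eq) (use outer0 in auto)
  also have "\<dots> = (\<Sum>j<2*N. \<Sum>p\<le>j. g j p)"
    unfolding g_def by (simp add: scale_sum_right mult.assoc sum.swap[of _ "{..<N}"])
  also have "\<dots> = (\<Sum>(p,t)\<in>{(p,t). p + t < 2*N}. g (p + t) p)"
    by (subst sum.triangle_reindex) simp
  also have "\<dots> = (\<Sum>(p,t)\<in>{..<N} \<times> {..<N}. g (p + t) p)"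
    by (rule sum_eq_supp) (auto simp: g_def intro!: sum.neutral w)
  also have "\<dots> = (\<Sum>p<N. \<Sum>t<N. \<Sum>k<N. H p t k)"
    by (simp add: sum.cartesian_product[symmetric] g_def H_def mult_ac)
  finally have L: "ev1 (\<lambda>j. ev1 (\<lambda>k. \<Sum>p\<le>j. sc (of_nat ((k + j - p) choose (j - p))) (w p (k + j - p))) z) x
     = (\<Sum>p<N. \<Sum>t<N. \<Sum>k<N. H p t k)" .
  have wk: "\<And>p t k. \<not> t + k < N \<Longrightarrow> w p (k + t) = 0" by (rule w) auto
  have tribox: "(\<Sum>(t,k)\<in>{(t,k). t + k < N}. H p t k) = (\<Sum>(t,k)\<in>{..<N} \<times> {..<N}. H p t k)" for p
  proof (rule sum.mono_neutral_left)
    show "finite ({..<N} \<times> {..<N})" by simp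
    show "{(t, k). t + k < N} \<subseteq> {..<N} \<times> {..<N}" by auto
    show "\<forall>i\<in>{..<N} \<times> {..<N} - {(t, k). t + k < N}. (case i of (t, k) \<Rightarrow> H p t k) = 0"
      by (auto simp: H_def) (metis wk)
  qed
  have R1: "ev1 (w p) (x + z) = (\<Sum>r<N. sc ((x + z) ^ r) (w p r))" for p
    by (rule ev1_eq) (auto intro: w)
  have "ev1 (\<lambda>p. ev1 (w p) (x + z)) x = (\<Sum>p<N. sc (x ^ p) (ev1 (w p) (x + z)))"
    by (rule ev1_eq) (auto simp: R1 intro!: sum.neutral w)
  also have "\<dots> = (\<Sum>p<N. \<Sum>r<N. \<Sum>t\<le>r. H p t (r - t))"
    unfolding R1 H_def
    by (simp add: scale_sum_right binomial_ring scale_sum_left power_add mult_ac)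
  also have "\<dots> = (\<Sum>p<N. \<Sum>(t,k)\<in>{(t,k). t + k < N}. H p t k)"
    by (subst sum.triangle_reindex) simp
  also have "\<dots> = (\<Sum>p<N. \<Sum>(t,k)\<in>{..<N} \<times> {..<N}. H p t k)"
    by (simp add: tribox)
  also have "\<dots> = (\<Sum>p<N. \<Sum>t<N. \<Sum>k<N. H p t k)"
    by (simp add: sum.cartesian_product[symmetric])
  finally show ?thesis using L by simp
qed

end


definition fin3 :: "(nat \<Rightarrow> nat \<Rightarrow> nat \<Rightarrow> 'b::zero) \<Rightarrow> bool" where
  "fin3 Q \<longleftrightarrow> finite {j. Q j \<noteq> 0} \<and> (\<forall>j. fin2 (Q j))"

lemma fin3_intro:
  assumes "finite J" "finite K" "\<And>j k. j \<notin> J \<or> k \<notin> K \<Longrightarrow> Q j k = 0" "\<And>j k. Q j k \<in> RA"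
  shows "fin3 Q"
proof -
  have "{j. Q j \<noteq> 0} \<subseteq> J" using assms(3) by (auto simp: fun_eq_iff)
  then have "finite {j. Q j \<noteq> 0}" using assms(1) finite_subset by blast
  moreover have "fin2 (Q j)" for j
    by (rule fin2_fin_subset[of K]) (use assms in auto)
  ultimately show ?thesis by (simp add: fin3_def)
qed

lemma fin2_zero[simp]: "fin2 (\<lambda>j i. 0)" by (simp add: fin2_def zero_fun_def)

context GD begin

definition ev3 :: "(nat \<Rightarrow> nat \<Rightarrow> nat \<Rightarrow> 'a) \<Rightarrow> complex \<Rightarrow> complex \<Rightarrow> complex \<Rightarrow> 'a" where
  "ev3 Q x z y = ev1 (\<lambda>j. ev2 (Q j) z y) x"

lemma ev2_zero[simp]: "ev2 0 x y = 0" by (simp add: ev2_def)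
lemma ev2_zero'[simp]: "ev2 (\<lambda>j i. 0) x y = 0" by (simp add: ev2_def)

lemma ev3_inner_RA: "fin3 Q \<Longrightarrow> (\<lambda>j. ev2 (Q j) z y) \<in> RA"
  by (rule RA_fin_subset[of "{j. Q j \<noteq> 0}"]) (auto simp: fin3_def)

lemma ev3_inj: "fin3 P \<Longrightarrow> fin3 Q \<Longrightarrow> (\<And>x z y. ev3 P x z y = ev3 Q x z y) \<Longrightarrow> P = Q"
proof -
  assume P: "fin3 P" and Q: "fin3 Q" and H: "\<And>x z y. ev3 P x z y = ev3 Q x z y"
  have "(\<lambda>j. ev2 (P j) z y) = (\<lambda>j. ev2 (Q j) z y)" for z y
    by (rule ev1_inj[OF ev3_inner_RA[OF P] ev3_inner_RA[OF Q]]) (use H in \<open>simp add: ev3_def\<close>)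
  then have "\<And>j z y. ev2 (P j) z y = ev2 (Q j) z y" by metis
  then have "\<And>j. P j = Q j" using ev2_inj P Q unfolding fin3_def by blast
  then show "P = Q" by auto
qed

lemma fin3_add: "fin3 P \<Longrightarrow> fin3 Q \<Longrightarrow> fin3 (\<lambda>j k. P j k + (Q j k :: nat \<Rightarrow> 'a))"
proof -
  assume P: "fin3 P" and Q: "fin3 Q"
  define J where "J = {j. P j \<noteq> 0} \<union> {j. Q j \<noteq> 0}"
  define K where "K = (\<Union>j\<in>J. {k. P j k \<noteq> 0} \<union> {k. Q j k \<noteq> 0})"
  have fJ: "finite J" using P Q by (simp add: J_def fin3_def)
  have fK: "finite K" using P Q fJ unfolding K_def fin3_def fin2_def by auto
  have zP: "P j k = 0" if "j \<notin> J \<or> k \<notin> K" for j k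
  proof (rule ccontr)
    assume "P j k \<noteq> 0"
    then have "P j \<noteq> 0" by auto
    then show False using that \<open>P j k \<noteq> 0\<close> by (auto simp: J_def K_def)
  qed
  have zQ: "Q j k = 0" if "j \<notin> J \<or> k \<notin> K" for j k
  proof (rule ccontr)
    assume "Q j k \<noteq> 0"
    then have "Q j \<noteq> 0" by auto
    then show False using that \<open>Q j k \<noteq> 0\<close> by (auto simp: J_def K_def)
  qed
  show ?thesis
    by (rule fin3_intro[OF fJ fK]) (use zP zQ P Q in \<open>auto simp: fin3_def fin2_def\<close>)
qed

lemma ev3_add: "fin3 P \<Longrightarrow> fin3 Q \<Longrightarrow> ev3 (\<lambda>j k. P j k + Q j k) x z y = ev3 P x z y + ev3 Q x z y"
proof -
  assume P: "fin3 P" and Q: "fin3 Q"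
  have "ev2 (\<lambda>k. P j k + Q j k) z y = ev2 (P j) z y + ev2 (Q j) z y" for j
  proof -
    have "(\<lambda>k. P j k + Q j k) = (\<lambda>k i. P j k i + Q j k i)" by (simp add: fun_eq_iff)
    then show ?thesis using P Q by (simp add: ev2_add fin3_def)
  qed
  then show ?thesis unfolding ev3_def using P Q by (simp add: ev1_add ev3_inner_RA)
qed

lemma ev1_swap:
  assumes "finite J" "finite K" "\<And>j k. j \<notin> J \<or> k \<notin> K \<Longrightarrow> F j k = 0"
  shows "ev1 (\<lambda>j. ev1 (\<lambda>k. F j k) z) x = ev1 (\<lambda>k. ev1 (\<lambda>j. F j k) x) z"
proof -
  have i1: "ev1 (\<lambda>k. F j k) z = (\<Sum>k\<in>K. sc (z ^ k) (F j k))" for j by (rule ev1_eq) (use assms in auto)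
  have i2: "ev1 (\<lambda>j. F j k) x = (\<Sum>j\<in>J. sc (x ^ j) (F j k))" for k by (rule ev1_eq) (use assms in auto)
  have "ev1 (\<lambda>j. ev1 (\<lambda>k. F j k) z) x = (\<Sum>j\<in>J. sc (x ^ j) (\<Sum>k\<in>K. sc (z ^ k) (F j k)))"
    unfolding i1 by (rule ev1_eq) (use assms in auto)
  also have "\<dots> = (\<Sum>k\<in>K. sc (z ^ k) (\<Sum>j\<in>J. sc (x ^ j) (F j k)))"
    by (simp add: scale_sum_right mult.commute sum.swap[of _ J])
  also have "\<dots> = ev1 (\<lambda>k. ev1 (\<lambda>j. F j k) x) z"
    unfolding i2 by (rule ev1_eq[symmetric]) (use assms in auto)
  finally show ?thesis .
qed

lemma B_zero2: "a \<in> RA \<Longrightarrow> BB a 0 = (\<lambda>j i. 0)"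
  by (rule ev2_inj) (simp_all add: B_ev Phi2)
lemma B_zero1: "a \<in> RA \<Longrightarrow> BB 0 a = (\<lambda>j i. 0)"
  by (rule ev2_inj) (simp_all add: B_ev Phi1)
lemma B_zero2'[simp]: "a \<in> RA \<Longrightarrow> BB a 0 j = 0" by (simp add: B_zero2 fun_eq_iff)
lemma B_zero1'[simp]: "a \<in> RA \<Longrightarrow> BB 0 a j = 0" by (simp add: B_zero1 fun_eq_iff)

end


context GD begin

abbreviation AA where "AA \<equiv> RA_alpha \<alpha>"

lemma fin2_Bk: "a \<in> RA \<Longrightarrow> b \<in> RA \<Longrightarrow> finite {j. BB a b j \<noteq> 0}"
  using fin2_B unfolding fin2_def by blast

lemma jac_L:
  assumes a: "a \<in> RA" and b: "b \<in> RA" and c: "c \<in> RA"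
  shows "fin3 (\<lambda>j k. BB (AA a) (BB b c k) j) \<and>
    ev3 (\<lambda>j k. BB (AA a) (BB b c k) j) x z y
      = \<Phi> (\<alpha> (ev1 a (- x))) (\<Phi> (ev1 b (- z)) (ev1 c (y + x + z)) z (y + x)) x y"
proof -
  define K where "K = {k. BB b c k \<noteq> 0}"
  define J where "J = (\<Union>k\<in>K. {j. BB (AA a) (BB b c k) j \<noteq> 0})"
  have fK: "finite K" using fin2_Bk[OF b c] by (simp add: K_def)
  have fJ: "finite J" unfolding J_def using fK a b c by (auto intro!: fin2_Bk)
  have z: "BB (AA a) (BB b c k) j = 0" if "j \<notin> J \<or> k \<notin> K" for j k
  proof (cases "k \<in> K")
    case False
    then have "BB b c k = 0" by (simp add: K_def)
    then show ?thesis using a by simp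
  next
    case True
    then show ?thesis using that by (auto simp: J_def)
  qed
  have f3: "fin3 (\<lambda>j k. BB (AA a) (BB b c k) j)"
    by (rule fin3_intro[OF fJ fK]) (use z a b c in auto)
  have "ev3 (\<lambda>j k. BB (AA a) (BB b c k) j) x z y
      = ev1 (\<lambda>j. ev1 (\<lambda>k. ev1 (BB (AA a) (BB b c k) j) y) z) x"
    by (simp add: ev3_def ev2_def)
  also have "\<dots> = ev1 (\<lambda>k. ev1 (\<lambda>j. ev1 (BB (AA a) (BB b c k) j) y) x) z"
    by (rule ev1_swap[OF fJ fK]) (use z in auto)
  also have "\<dots> = ev1 (\<lambda>k. \<Phi> (\<alpha> (ev1 a (- x))) (ev1 (BB b c k) (y + x)) x y) z"
    using a b c by (simp add: ev2_def[symmetric] B_ev ev1_alpha)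
  also have "\<dots> = \<Phi> (\<alpha> (ev1 a (- x))) (ev1 (\<lambda>k. ev1 (BB b c k) (y + x)) z) x y"
    by (rule ev1_lin[OF Phi_lin2]) (use b c in \<open>simp add: ev1_inner_RA\<close>)
  also have "\<dots> = \<Phi> (\<alpha> (ev1 a (- x))) (\<Phi> (ev1 b (- z)) (ev1 c (y + x + z)) z (y + x)) x y"
    using b c by (simp add: ev2_def[symmetric] B_ev)
  finally show ?thesis using f3 by simp
qed

lemma jac_R2:
  assumes a: "a \<in> RA" and b: "b \<in> RA" and c: "c \<in> RA"
  shows "fin3 (\<lambda>j k. BB (AA b) (BB a c j) k) \<and>
    ev3 (\<lambda>j k. BB (AA b) (BB a c j) k) x z y
      = \<Phi> (\<alpha> (ev1 b (- z))) (\<Phi> (ev1 a (- x)) (ev1 c (y + x + z)) x (y + z)) z y"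
proof -
  define J where "J = {j. BB a c j \<noteq> 0}"
  define K where "K = (\<Union>j\<in>J. {k. BB (AA b) (BB a c j) k \<noteq> 0})"
  have fJ: "finite J" using fin2_Bk[OF a c] by (simp add: J_def)
  have fK: "finite K" unfolding K_def using fJ a b c by (auto intro!: fin2_Bk)
  have z: "BB (AA b) (BB a c j) k = 0" if "j \<notin> J \<or> k \<notin> K" for j k
  proof (cases "j \<in> J")
    case False
    then have "BB a c j = 0" by (simp add: J_def)
    then show ?thesis using b by simp
  next
    case True
    then show ?thesis using that by (auto simp: K_def)
  qed
  have f3: "fin3 (\<lambda>j k. BB (AA b) (BB a c j) k)"
    by (rule fin3_intro[OF fJ fK]) (use z a b c in auto)
  have e: "y + z + x = y + x + z" by (simp add: add_ac)
  have "ev3 (\<lambda>j k. BB (AA b) (BB a c j) k) x z y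
      = ev1 (\<lambda>j. \<Phi> (\<alpha> (ev1 b (- z))) (ev1 (BB a c j) (y + z)) z y) x"
    using a b c by (simp add: ev3_def B_ev ev1_alpha)
  also have "\<dots> = \<Phi> (\<alpha> (ev1 b (- z))) (ev1 (\<lambda>j. ev1 (BB a c j) (y + z)) x) z y"
    by (rule ev1_lin[OF Phi_lin2]) (use a c in \<open>simp add: ev1_inner_RA\<close>)
  also have "\<dots> = \<Phi> (\<alpha> (ev1 b (- z))) (\<Phi> (ev1 a (- x)) (ev1 c (y + x + z)) x (y + z)) z y"
    using a c by (simp add: ev2_def[symmetric] B_ev e)
  finally show ?thesis using f3 by simp
qed

lemma jac_R1:
  assumes a: "a \<in> RA" and b: "b \<in> RA" and c: "c \<in> RA"
  shows "fin3 (\<lambda>j k. \<Sum>p\<le>j. RA_scale sc (of_nat ((k + j - p) choose (j - p))) (BB (BB a b p) (AA c) (k + j - p))) \<and>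
    ev3 (\<lambda>j k. \<Sum>p\<le>j. RA_scale sc (of_nat ((k + j - p) choose (j - p))) (BB (BB a b p) (AA c) (k + j - p))) x z y
      = \<Phi> (\<Phi> (ev1 a (- x)) (ev1 b (- z)) x (- (x + z))) (\<alpha> (ev1 c (y + x + z))) (x + z) y"
proof -
  define W where "W p r = BB (BB a b p) (AA c) r" for p r
  define P where "P = {p. BB a b p \<noteq> 0}"
  define R where "R = (\<Union>p\<in>P. {r. W p r \<noteq> 0})"
  have fP: "finite P" using fin2_Bk[OF a b] by (simp add: P_def)
  have fR: "finite R" unfolding R_def W_def using fP a b c by (auto intro!: fin2_Bk)
  obtain N where N: "P \<union> R \<subseteq> {..<N}" using fP fR finite_nat_iff_bounded[of "P \<union> R"] by auto
  have Wz: "W p r = 0" if "N \<le> p \<or> N \<le> r" for p r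
  proof (cases "p \<in> P")
    case False
    then have "BB a b p = 0" by (simp add: P_def)
    then show ?thesis using c by (simp add: W_def)
  next
    case True
    then have "N \<le> r" using that N by auto
    then have "r \<notin> R" using N by auto
    then show ?thesis using True by (auto simp: R_def)
  qed
  have WRA: "W p r \<in> RA" for p r using a b c by (simp add: W_def)
  have JR: "(\<Sum>p\<le>j. RA_scale sc (of_nat ((k + j - p) choose (j - p))) (BB (BB a b p) (AA c) (k + j - p)))
      = (\<lambda>i. \<Sum>p\<le>j. sc (of_nat ((k + j - p) choose (j - p))) (W p (k + j - p) i))" for j k
    by (simp add: fun_eq_iff fsum_apply RA_scale_def W_def)
  have Jz: "(\<lambda>i. \<Sum>p\<le>j. sc (of_nat ((k + j - p) choose (j - p))) (W p (k + j - p) i)) = 0"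
    if "j \<notin> {..<2*N} \<or> k \<notin> {..<N}" for j k
  proof -
    have "W p (k + j - p) = 0" if "p \<le> j" for p
    proof (cases "N \<le> p")
      case False
      then show ?thesis using \<open>j \<notin> {..<2*N} \<or> k \<notin> {..<N}\<close> \<open>p \<le> j\<close> by (intro Wz) auto
    qed (simp add: Wz)
    then show ?thesis by (simp add: fun_eq_iff)
  qed
  have f3: "fin3 (\<lambda>j k. \<Sum>p\<le>j. RA_scale sc (of_nat ((k + j - p) choose (j - p))) (BB (BB a b p) (AA c) (k + j - p)))"
    unfolding JR by (rule fin3_intro[of "{..<2*N}" "{..<N}"]) (use Jz WRA in auto)
  define w where "w p r = ev1 (W p r) y" for p r
  have wz: "w p r = 0" if "N \<le> p \<or> N \<le> r" for p r using Wz[OF that] by (simp add: w_def)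
  have ek: "ev1 (\<lambda>i. \<Sum>p\<le>j. sc (of_nat ((k + j - p) choose (j - p))) (W p (k + j - p) i)) y
      = (\<Sum>p\<le>j. sc (of_nat ((k + j - p) choose (j - p))) (w p (k + j - p)))" for j k
    using WRA by (simp add: ev1_sum ev1_sc w_def)
  have ew: "ev1 (w p) (x + z) = \<Phi> (ev1 (BB a b p) (- (x + z))) (\<alpha> (ev1 c (y + x + z))) (x + z) y" for p
  proof -
    have "w p = (\<lambda>r. ev1 (BB (BB a b p) (AA c) r) y)" by (simp add: fun_eq_iff w_def W_def)
    then have "ev1 (w p) (x + z) = ev2 (BB (BB a b p) (AA c)) (x + z) y"
      by (simp add: ev2_def)
    also have "\<dots> = \<Phi> (ev1 (BB a b p) (- (x + z))) (\<alpha> (ev1 c (y + (x + z)))) (x + z) y"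
      using a b c by (simp add: B_ev ev1_alpha)
    finally show ?thesis by (simp add: add_ac)
  qed
  have "ev3 (\<lambda>j k. \<Sum>p\<le>j. RA_scale sc (of_nat ((k + j - p) choose (j - p))) (BB (BB a b p) (AA c) (k + j - p))) x z y
      = ev1 (\<lambda>j. ev1 (\<lambda>k. \<Sum>p\<le>j. sc (of_nat ((k + j - p) choose (j - p))) (w p (k + j - p))) z) x"
    unfolding JR ev3_def ev2_def ek ..
  also have "\<dots> = ev1 (\<lambda>p. ev1 (w p) (x + z)) x"
    by (rule CL[of N]) (use wz in auto)
  also have "\<dots> = \<Phi> (ev1 (\<lambda>p. ev1 (BB a b p) (- (x + z))) x) (\<alpha> (ev1 c (y + x + z))) (x + z) y"
    unfolding ew by (rule ev1_lin[OF Phi_lin1]) (use a b in \<open>simp add: ev1_inner_RA\<close>)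
  also have "\<dots> = \<Phi> (\<Phi> (ev1 a (- x)) (ev1 b (- (x + z) + x)) x (- (x + z))) (\<alpha> (ev1 c (y + x + z))) (x + z) y"
    using a b by (simp add: ev2_def[symmetric] B_ev)
  also have "- (x + z) + x = - z" by simp
  finally show ?thesis using f3 by simp
qed

end

context GD begin

lemma jac_expand:
  "\<Phi> (\<alpha> u) (\<Phi> v w z (y + x)) x y = \<Phi> (\<Phi> u v x (- (x + z))) (\<alpha> w) (x + z) y + \<Phi> (\<alpha> v) (\<Phi> u w x (y + z)) z y
   + ((br (br (u) (w)) (\<alpha> v)) + (br (br (w) (v)) (\<alpha> u)) + (br (br (v) (u)) (\<alpha> w))) - ((br (br (u) (v)) (\<alpha> w)) + (br (br (v) (u)) (\<alpha> w))) - ((br (\<alpha> w) (br (u) (v))) + (br (\<alpha> w) (br (v) (u)))) + ((br (br (u) (v)) (\<alpha> w)) + (br (\<alpha> w) (br (u) (v)))) - ((br (br (u) (w)) (\<alpha> v)) + (br (br (w) (u)) (\<alpha> v))) + sc (z) ((br (circ (v) (w)) (\<alpha> u)) - (br (circ (v) (u)) (\<alpha> w)) + (circ (br (v) (w)) (\<alpha> u)) - (circ (br (v) (u)) (\<alpha> w)) - (circ (\<alpha> v) (br (w) (u)))) + sc (z) ((br (circ (w) (v)) (\<alpha> u)) - (br (circ (w) (u)) (\<alpha> v)) + (circ (br (w) (v)) (\<alpha> u)) - (circ (br (w) (u)) (\<alpha> v)) - (circ (\<alpha> w) (br (v) (u)))) + sc (z) ((br (circ (v) (u)) (\<alpha>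 w)) + (br (\<alpha> w) (circ (v) (u)))) - sc (z) ((circ (br (v) (w)) (\<alpha> u)) + (circ (br (w) (v)) (\<alpha> u))) + sc (z * z) ((circ (circ (v) (u)) (\<alpha> w)) - (circ (circ (v) (w)) (\<alpha> u))) + sc (z * z) ((circ (circ (v) (w)) (\<alpha> u)) - (circ (\<alpha> v) (circ (w) (u))) - (circ (circ (w) (v)) (\<alpha> u)) + (circ (\<alpha> w) (circ (v) (u)))) - sc (z * z) ((circ (circ (w) (u)) (\<alpha> v)) - (circ (circ (w) (v)) (\<alpha> u))) + sc (y) ((br (circ (w) (v)) (\<alpha> u)) - (br (circ (w) (u)) (\<alpha> v)) + (circ (br (w) (v)) (\<alpha> u)) - (circ (br (w) (u)) (\<alpha> v)) - (circ (\<alpha> w) (br (v) (u)))) + sc (y * z) ((circ (circ (v) (w)) (\<alpha> u)) - (circ (\<alpha> v) (circ (w) (u))) - (circ (circ (w) (v)) (\<alpha> u)) + (circ (\<alpha> w) (circ (v) (u)))) - sc (y * z) ((circ (circ (w) (u)) (\<alpha> v)) - (circ (circ (w) (v)) (\<alpha> u))) - sc (y * z) ((circ (circ (w) (u)) (\<alpha> v)) - (circ (circ (w) (v)) (\<alpha> u))) - sc (y * y) ((circ (circ (w) (u)) (\<alpha> v)) - (circ (circ (w) (v)) (\<alpha> u))) - sc (x) ((br (circ (u) (w)) (\<alpha> v)) - (br (circ (u) (v)) (\<alpha> w)) + (circ (br (u) (w)) (\<alpha> v)) - (circ (br (u) (v)) (\<alpha> w)) - (circ (\<alpha> u) (br (w)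 (v)))) + sc (x) ((br (circ (w) (v)) (\<alpha> u)) - (br (circ (w) (u)) (\<alpha> v)) + (circ (br (w) (v)) (\<alpha> u)) - (circ (br (w) (u)) (\<alpha> v)) - (circ (\<alpha> w) (br (v) (u)))) - sc (x) ((circ (br (u) (v)) (\<alpha> w)) + (circ (br (v) (u)) (\<alpha> w))) - sc (x) ((br (circ (u) (v)) (\<alpha> w)) + (br (\<alpha> w) (circ (u) (v)))) + sc (x) ((circ (br (u) (w)) (\<alpha> v)) + (circ (br (w) (u)) (\<alpha> v))) - sc (x * z) ((circ (circ (u) (v)) (\<alpha> w)) - (circ (\<alpha> u) (circ (v) (w))) - (circ (circ (v) (u)) (\<alpha> w)) + (circ (\<alpha> v) (circ (u) (w)))) - sc (x * z) ((circ (circ (u) (w)) (\<alpha> v)) - (circ (\<alpha> u) (circ (w) (v))) - (circ (circ (w) (u)) (\<alpha> v)) + (circ (\<alpha> w) (circ (u) (v)))) + sc (x * z) ((circ (circ (v) (w)) (\<alpha> u)) - (circ (\<alpha> v) (circ (w) (u))) - (circ (circ (w) (v)) (\<alpha> u)) + (circ (\<alpha> w) (circ (v) (u)))) - sc (x * z) ((circ (circ (w) (u)) (\<alpha> v)) - (circ (circ (w) (v)) (\<alpha> u))) - sc (x * z) ((circ (circ (w) (u)) (\<alpha> v)) - (circ (circ (w) (v)) (\<alpha> u))) - sc (x * y) ((circ (circ (u) (w)) (\<alpha> v)) - (circ (\<alpha> u) (circ (w) (v))) - (circ (circ (w) (u)) (\<alpha> v)) + (circ (\<alpha> w) (circ (u)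 (v)))) - sc (x * y) ((circ (circ (w) (u)) (\<alpha> v)) - (circ (circ (w) (v)) (\<alpha> u))) - sc (x * y) ((circ (circ (w) (u)) (\<alpha> v)) - (circ (circ (w) (v)) (\<alpha> u))) - sc (x * x) ((circ (circ (u) (v)) (\<alpha> w)) - (circ (circ (u) (w)) (\<alpha> v))) - sc (x * x) ((circ (circ (u) (w)) (\<alpha> v)) - (circ (\<alpha> u) (circ (w) (v))) - (circ (circ (w) (u)) (\<alpha> v)) + (circ (\<alpha> w) (circ (u) (v)))) - sc (x * x) ((circ (circ (w) (u)) (\<alpha> v)) - (circ (circ (w) (v)) (\<alpha> u)))"
  by (simp add: \<Phi>_def algebra_simps)
lemma jac_scalar:
  assumes gd: "hom_GD_bialgebra br circ \<alpha>"
  shows "\<Phi> (\<alpha> u) (\<Phi> v w z (y + x)) x y = \<Phi> (\<Phi> u v x (- (x + z))) (\<alpha> w) (x + z) y + \<Phi> (\<alpha> v) (\<Phi> u w x (y + z)) z y"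
proof -
  have anti: "\<And>a b. br a b = - br b a" and jac: "\<And>a b c. br (br a b) (\<alpha> c) + br (br b c) (\<alpha> a) + br (br c a) (\<alpha> b) = 0"
    and n1: "\<And>a b c. circ (circ a b) (\<alpha> c) - circ (\<alpha> a) (circ b c) = circ (circ b a) (\<alpha> c) - circ (\<alpha> b) (circ a c)"
    and n2: "\<And>a b c. circ (circ a b) (\<alpha> c) = circ (circ a c) (\<alpha> b)"
    and cp: "\<And>a b c. br (circ a b) (\<alpha> c) - br (circ a c) (\<alpha> b) + circ (br a b) (\<alpha> c) - circ (br a c) (\<alpha> b) - circ (\<alpha> a) (br b c) = 0"
    using gd unfolding hom_GD_bialgebra_def hom_lie_def hom_novikov_def by blast+
  have z1: "\<And>a b c. br (br a b) (\<alpha> c) + br (br b a) (\<alpha> c) = 0" using anti by (metis br1(4) add.right_inverse)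
  have z2: "\<And>a b c. br (\<alpha> c) (br a b) + br (\<alpha> c) (br b a) = 0" using anti by (metis br2(4) add.right_inverse)
  have z3: "\<And>a b c. circ (br a b) (\<alpha> c) + circ (br b a) (\<alpha> c) = 0" using anti by (metis circ1(4) add.right_inverse)
  have z4: "\<And>t c. br t (\<alpha> c) + br (\<alpha> c) t = 0" using anti by (metis add.right_inverse)
  have z5: "\<And>a b c. circ (circ a b) (\<alpha> c) - circ (\<alpha> a) (circ b c) - circ (circ b a) (\<alpha> c) + circ (\<alpha> b) (circ a c) = 0"
    using n1 by (simp add: algebra_simps)
  have z6: "\<And>a b c. circ (circ a b) (\<alpha> c) - circ (circ a c) (\<alpha> b) = 0" using n2 by simp
  show ?thesis using jac_expand[of u v w z y x] by (simp add: z1 z2 z3 z4 z5 z6 jac cp)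
qed

end


context GD begin

lemma quad_zero:
  assumes H: "\<And>t. A0 + sc t A1 + sc (t * t) A2 = 0"
  shows "A0 = 0 \<and> A1 = 0 \<and> A2 = 0"
proof -
  define f where "f i = (if i = 0 then A0 else if i = 1 then A1 else if i = 2 then A2 else 0)" for i :: nat
  have fRA: "f \<in> RA" by (rule RA_fin_subset[of "{0,1,2}"]) (auto simp: f_def)
  have "ev1 f t = A0 + sc t A1 + sc (t * t) A2" for t
    by (subst ev1_eq[of "{0,1,2}"]) (auto simp: f_def power2_eq_square)
  then have "f i = 0" for i using ev1_inj0[OF fRA] H by metis
  from this[of 0] this[of 1] this[of 2] show ?thesis by (simp add: f_def)
qed

lemma expY:
  "\<Phi> (\<alpha> u) (\<Phi> v w 0 (t + 0)) 0 t - (\<Phi> (\<Phi> u v 0 (- (0 + 0))) (\<alpha> w) (0 + 0) t + \<Phi> (\<alpha> v) (\<Phi> u w 0 (t + 0)) 0 t)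
   = ((br (br (w) (v)) (\<alpha> u)) - (br (\<alpha> w) (br (v) (u))) - (br (br (w) (u)) (\<alpha> v)))
     + sc t ((br (circ (w) (v)) (\<alpha> u)) + (circ (br (w) (v)) (\<alpha> u)) - (circ (\<alpha> w) (br (v) (u))) - (br (circ (w) (u)) (\<alpha> v)) - (circ (br (w) (u)) (\<alpha> v)))
     + sc (t * t) ((circ (circ (w) (v)) (\<alpha> u)) - (circ (circ (w) (u)) (\<alpha> v)))"
  by (simp add: \<Phi>_def algebra_simps)

lemma expZ:
  "\<Phi> (\<alpha> u) (\<Phi> v w t (0 + 0)) 0 0 - (\<Phi> (\<Phi> u v 0 (- (0 + t))) (\<alpha> w) (0 + t) 0 + \<Phi> (\<alpha> v) (\<Phi> u w 0 (0 + t)) t 0)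
   = ((br (br (w) (v)) (\<alpha> u)) - (br (\<alpha> w) (br (v) (u))) - (br (br (w) (u)) (\<alpha> v)))
     + sc t ((br (circ (w) (v)) (\<alpha> u)) + (br (circ (v) (w)) (\<alpha> u)) + (br (\<alpha> w) (circ (v) (u))) - (circ (\<alpha> w) (br (v) (u))) - (circ (br (v) (u)) (\<alpha> w)) - (br (circ (w) (u)) (\<alpha> v)) - (circ (br (w) (u)) (\<alpha> v)) - (circ (\<alpha> v) (br (w) (u))))
     + sc (t * t) ((circ (\<alpha> w) (circ (v) (u))) + (circ (circ (v) (u)) (\<alpha> w)) - (circ (circ (w) (u)) (\<alpha> v)) - (circ (\<alpha> v) (circ (w) (u))))"
  by (simp add: \<Phi>_def algebra_simps)

lemma Phi_skew: "br u v = - br v u \<Longrightarrow> \<Phi> u v x y = - \<Phi> v u (- x - y) y"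
  by (simp add: \<Phi>_def algebra_simps)

end


context GD begin

lemma jac_family:
  assumes a: "a \<in> RA" and b: "b \<in> RA" and c: "c \<in> RA"
  shows "fin3 (\<lambda>j k. BB (AA a) (BB b c k) j)"
    "fin3 (\<lambda>j k. (\<Sum>p\<le>j. RA_scale sc (of_nat ((k + j - p) choose (j - p))) (BB (BB a b p) (AA c) (k + j - p))) + BB (AA b) (BB a c j) k)"
    "ev3 (\<lambda>j k. BB (AA a) (BB b c k) j) x z y
      = \<Phi> (\<alpha> (ev1 a (- x))) (\<Phi> (ev1 b (- z)) (ev1 c (y + x + z)) z (y + x)) x y"
    "ev3 (\<lambda>j k. (\<Sum>p\<le>j. RA_scale sc (of_nat ((k + j - p) choose (j - p))) (BB (BB a b p) (AA c) (k + j - p))) + BB (AA b) (BB a c j) k) x z y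
      = \<Phi> (\<Phi> (ev1 a (- x)) (ev1 b (- z)) x (- (x + z))) (\<alpha> (ev1 c (y + x + z))) (x + z) y
        + \<Phi> (\<alpha> (ev1 b (- z))) (\<Phi> (ev1 a (- x)) (ev1 c (y + x + z)) x (y + z)) z y"
proof -
  note L = jac_L[OF a b c, of x z y] and R1 = jac_R1[OF a b c, of x z y] and R2 = jac_R2[OF a b c, of x z y]
  show "fin3 (\<lambda>j k. BB (AA a) (BB b c k) j)" using L by simp
  show "fin3 (\<lambda>j k. (\<Sum>p\<le>j. RA_scale sc (of_nat ((k + j - p) choose (j - p))) (BB (BB a b p) (AA c) (k + j - p))) + BB (AA b) (BB a c j) k)"
    using fin3_add[of "\<lambda>j k. (\<Sum>p\<le>j. RA_scale sc (of_nat ((k + j - p) choose (j - p))) (BB (BB a b p) (AA c) (k + j - p)))"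
      "\<lambda>j k. BB (AA b) (BB a c j) k"] R1 R2 by simp
  show "ev3 (\<lambda>j k. BB (AA a) (BB b c k) j) x z y
      = \<Phi> (\<alpha> (ev1 a (- x))) (\<Phi> (ev1 b (- z)) (ev1 c (y + x + z)) z (y + x)) x y" using L by simp
  show "ev3 (\<lambda>j k. (\<Sum>p\<le>j. RA_scale sc (of_nat ((k + j - p) choose (j - p))) (BB (BB a b p) (AA c) (k + j - p))) + BB (AA b) (BB a c j) k) x z y
      = \<Phi> (\<Phi> (ev1 a (- x)) (ev1 b (- z)) x (- (x + z))) (\<alpha> (ev1 c (y + x + z))) (x + z) y
        + \<Phi> (\<alpha> (ev1 b (- z))) (\<Phi> (ev1 a (- x)) (ev1 c (y + x + z)) x (y + z)) z y"
    using ev3_add[of "\<lambda>j k. (\<Sum>p\<le>j. RA_scale sc (of_nat ((k + j - p) choose (j - p))) (BB (BB a b p) (AA c) (k + j - p)))"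
      "\<lambda>j k. BB (AA b) (BB a c j) k" x z y] R1 R2 by simp
qed

lemma skew_ev_eq:
  assumes a: "a \<in> RA" and b: "b \<in> RA"
  shows "ev2 (skewR (BB b a)) x y = - \<Phi> (ev1 b (y + x)) (ev1 a (- x)) (- x - y) y"
proof -
  have h1: "- (- x - y) = y + x" by simp
  have h2: "y + (- x - y) = - x" by simp
  have "ev2 (skewR (BB b a)) x y = - ev2 (BB b a) (- x - y) y"
    using skew_main[of "BB b a" x y] a b by simp
  also have "\<dots> = - \<Phi> (ev1 b (- (- x - y))) (ev1 a (y + (- x - y))) (- x - y) y"
    by (simp only: B_ev[OF b a])
  also have "\<dots> = - \<Phi> (ev1 b (y + x)) (ev1 a (- x)) (- x - y) y"
    by (simp only: h1 h2)
  finally show ?thesis .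
qed

theorem main:
  "hom_GD_bialgebra br circ \<alpha> \<longleftrightarrow>
     (hom_lie_conformal (RA_scale sc) RA RA_D (RA_alpha \<alpha>) (RA_bracket sc br circ)
      \<and> RA_degree 2 (RA_bracket sc br circ))"
proof
  assume gd: "hom_GD_bialgebra br circ \<alpha>"
  have anti: "\<And>a b. br a b = - br b a" using gd unfolding hom_GD_bialgebra_def hom_lie_def by blast
  have vsR: "vector_space (RA_scale sc)"
    unfolding vector_space_def RA_scale_def by (simp add: fun_eq_iff scale_right_distrib scale_left_distrib)
  have skew: "BB a b k = - (\<Sum>j\<in>{j. BB b a j \<noteq> 0}. RA_scale sc ((-1) ^ j * of_nat (j choose k)) ((RA_D ^^ (j - k)) (BB b a j)))"
    if a: "a \<in> RA" and b: "b \<in> RA" for a b k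
  proof -
    have "BB a b = skewR (BB b a)"
    proof (rule ev2_inj)
      show "fin2 (BB a b)" using a b by simp
      show "fin2 (skewR (BB b a))" using skew_main[of "BB b a"] a b by simp
      fix x y
      show "ev2 (BB a b) x y = ev2 (skewR (BB b a)) x y"
        unfolding skew_ev_eq[OF a b] B_ev[OF a b] by (rule Phi_skew[OF anti])
    qed
    then show ?thesis by (simp add: skewR_def)
  qed
  have jac: "BB (AA a) (BB b c k) j =
      (\<Sum>p\<le>j. RA_scale sc (of_nat ((k + j - p) choose (j - p))) (BB (BB a b p) (AA c) (k + j - p))) + BB (AA b) (BB a c j) k"
    if a: "a \<in> RA" and b: "b \<in> RA" and c: "c \<in> RA" for a b c j k
  proof -
    have "(\<lambda>j k. BB (AA a) (BB b c k) j) =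
      (\<lambda>j k. (\<Sum>p\<le>j. RA_scale sc (of_nat ((k + j - p) choose (j - p))) (BB (BB a b p) (AA c) (k + j - p))) + BB (AA b) (BB a c j) k)"
    proof (rule ev3_inj)
      show "fin3 (\<lambda>j k. BB (AA a) (BB b c k) j)" by (rule jac_family(1)[OF a b c])
      show "fin3 (\<lambda>j k. (\<Sum>p\<le>j. RA_scale sc (of_nat ((k + j - p) choose (j - p))) (BB (BB a b p) (AA c) (k + j - p))) + BB (AA b) (BB a c j) k)"
        by (rule jac_family(2)[OF a b c])
      fix x z y
      show "ev3 (\<lambda>j k. BB (AA a) (BB b c k) j) x z y = ev3 (\<lambda>j k. (\<Sum>p\<le>j. RA_scale sc (of_nat ((k + j - p) choose (j - p))) (BB (BB a b p) (AA c) (k + j - p))) + BB (AA b) (BB a c j) k) x z y"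
        unfolding jac_family(3,4)[OF a b c] by (rule jac_scalar[OF gd])
    qed
    then show ?thesis by metis
  qed
  have conf: "hom_lie_conformal (RA_scale sc) RA RA_D (RA_alpha \<alpha>) (RA_bracket sc br circ)"
    unfolding hom_lie_conformal_def
  proof (intro conjI ballI allI)
    show "vector_space (RA_scale sc)" by (rule vsR)
  next
    show "(0::nat \<Rightarrow> 'a) \<in> RA" by simp
  next
    fix a b :: "nat \<Rightarrow> 'a" assume "a \<in> RA" "b \<in> RA" then show "a + b \<in> RA" by simp
  next
    fix c and a :: "nat \<Rightarrow> 'a" assume "a \<in> RA" then show "RA_scale sc c a \<in> RA" by simp
  next
    fix a :: "nat \<Rightarrow> 'a" assume "a \<in> RA" then show "RA_D a \<in> RA" by simp
  next
    fix a :: "nat \<Rightarrow> 'a" assume "a \<in> RA" then show "RA_alpha \<alpha> a \<in> RA" by simp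
  next
    fix a :: "nat \<Rightarrow> 'a" show "RA_alpha \<alpha> (RA_D a) = RA_D (RA_alpha \<alpha> a)"
      by (simp add: RA_alpha_def RA_D_def fun_eq_iff)
  next
    fix a b :: "nat \<Rightarrow> 'a" show "RA_D (a + b) = RA_D a + RA_D b" by (simp add: RA_D_def fun_eq_iff)
  next
    fix a b :: "nat \<Rightarrow> 'a" show "RA_alpha \<alpha> (a + b) = RA_alpha \<alpha> a + RA_alpha \<alpha> b"
      by (simp add: RA_alpha_def fun_eq_iff)
  next
    fix c and a :: "nat \<Rightarrow> 'a" show "RA_D (RA_scale sc c a) = RA_scale sc c (RA_D a)" by (simp add: RA_D_def RA_scale_def fun_eq_iff)
  next
    fix c and a :: "nat \<Rightarrow> 'a" show "RA_alpha \<alpha> (RA_scale sc c a) = RA_scale sc c (RA_alpha \<alpha> a)"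
      by (simp add: RA_alpha_def RA_scale_def fun_eq_iff)
  next
    fix a b :: "nat \<Rightarrow> 'a" assume "a \<in> RA" "b \<in> RA" then show "finite {j. BB a b j \<noteq> 0}" by (rule fin2_Bk)
  next
    fix a b :: "nat \<Rightarrow> 'a" and j assume "a \<in> RA" "b \<in> RA" then show "BB a b j \<in> RA" by simp
  next
    fix a b c :: "nat \<Rightarrow> 'a" and j assume "a \<in> RA" "b \<in> RA" "c \<in> RA" then show "BB (a + b) c j = BB a c j + BB b c j" by (rule B_add1)
  next
    fix a b c :: "nat \<Rightarrow> 'a" and j assume "a \<in> RA" "b \<in> RA" "c \<in> RA" then show "BB c (a + b) j = BB c a j + BB c b j" by (rule B_add2)
  next
    fix z and a b :: "nat \<Rightarrow> 'a" and j assume "a \<in> RA" "b \<in> RA" then show "BB (RA_scale sc z a) b j = RA_scale sc z (BB a b j)" by (rule B_scale1)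
  next
    fix z and a b :: "nat \<Rightarrow> 'a" and j assume "a \<in> RA" "b \<in> RA" then show "BB a (RA_scale sc z b) j = RA_scale sc z (BB a b j)" by (rule B_scale2)
  next
    fix a b :: "nat \<Rightarrow> 'a" and j assume "a \<in> RA" "b \<in> RA" then show "BB (RA_D a) b j = (if j = 0 then 0 else - BB a b (j - 1))" by (rule B_D)
  next
    fix a b :: "nat \<Rightarrow> 'a" and k assume "a \<in> RA" "b \<in> RA"
    then show "BB a b k = - (\<Sum>j\<in>{j. BB b a j \<noteq> 0}. RA_scale sc ((-1) ^ j * of_nat (j choose k)) ((RA_D ^^ (j - k)) (BB b a j)))"
      by (rule skew)
  next
    fix a b c :: "nat \<Rightarrow> 'a" and j k assume "a \<in> RA" "b \<in> RA" "c \<in> RA"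
    then show "BB (AA a) (BB b c k) j =
      (\<Sum>p\<le>j. RA_scale sc (of_nat ((k + j - p) choose (j - p))) (BB (BB a b p) (AA c) (k + j - p))) + BB (AA b) (BB a c j) k"
      by (rule jac)
  qed
  have deg: "RA_degree 2 (RA_bracket sc br circ)"
    unfolding RA_degree_def
  proof (intro allI)
    fix u v :: 'a
    have "\<forall>j. BB (RA_emb u) (RA_emb v) j = (\<lambda>i. if i + j < 2 then G u v j i else 0)"
      by (auto simp: B_emb G_def gen_bracket_def fun_eq_iff)
    then show "\<exists>w. \<forall>j. BB (RA_emb u) (RA_emb v) j = (\<lambda>i. if i + j < 2 then w i j else 0)"
      by (intro exI[of _ "\<lambda>i j. G u v j i"]) simp
  qed
  show "hom_lie_conformal (RA_scale sc) RA RA_D (RA_alpha \<alpha>) (RA_bracket sc br circ) \<and> RA_degree 2 (RA_bracket sc br circ)"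
    using conf deg by blast
next
  assume "hom_lie_conformal (RA_scale sc) RA RA_D (RA_alpha \<alpha>) (RA_bracket sc br circ) \<and> RA_degree 2 (RA_bracket sc br circ)"
  then have conf: "hom_lie_conformal (RA_scale sc) RA RA_D (RA_alpha \<alpha>) (RA_bracket sc br circ)" by blast
  have skew_c: "\<forall>a\<in>RA. \<forall>b\<in>RA. \<forall>k. BB a b k = - (\<Sum>j\<in>{j. BB b a j \<noteq> 0}. RA_scale sc ((-1) ^ j * of_nat (j choose k)) ((RA_D ^^ (j - k)) (BB b a j)))"
    using conf unfolding hom_lie_conformal_def by blast
  have jac_c: "\<forall>a\<in>RA. \<forall>b\<in>RA. \<forall>c\<in>RA. \<forall>j k. BB (AA a) (BB b c k) j =
      (\<Sum>p\<le>j. RA_scale sc (of_nat ((k + j - p) choose (j - p))) (BB (BB a b p) (AA c) (k + j - p))) + BB (AA b) (BB a c j) k"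
    using conf unfolding hom_lie_conformal_def by (elim conjE) assumption
  have anti: "br u v = - br v u" for u v
  proof -
    have "BB (RA_emb v) (RA_emb u) = skewR (BB (RA_emb u) (RA_emb v))"
    proof
      fix k show "BB (RA_emb v) (RA_emb u) k = skewR (BB (RA_emb u) (RA_emb v)) k"
        unfolding skewR_def by (rule skew_c[rule_format, OF RA_emb_RA RA_emb_RA])
    qed
    then have "ev2 (BB (RA_emb v) (RA_emb u)) 0 0 = ev2 (skewR (BB (RA_emb u) (RA_emb v))) 0 0" by simp
    then show ?thesis unfolding skew_ev_eq[OF RA_emb_RA RA_emb_RA] B_ev[OF RA_emb_RA RA_emb_RA]
      by (simp add: \<Phi>_def)
  qed
  have J: "\<Phi> (\<alpha> u) (\<Phi> v w z (y + x)) x y = \<Phi> (\<Phi> u v x (- (x + z))) (\<alpha> w) (x + z) y + \<Phi> (\<alpha> v) (\<Phi> u w x (y + z)) z y"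
    for u v w x y z
  proof -
    have "(\<lambda>j k. BB (AA (RA_emb u)) (BB (RA_emb v) (RA_emb w) k) j) =
      (\<lambda>j k. (\<Sum>p\<le>j. RA_scale sc (of_nat ((k + j - p) choose (j - p))) (BB (BB (RA_emb u) (RA_emb v) p) (AA (RA_emb w)) (k + j - p))) + BB (AA (RA_emb v)) (BB (RA_emb u) (RA_emb w) j) k)"
      by (rule ext, rule ext, rule jac_c[rule_format, OF RA_emb_RA RA_emb_RA RA_emb_RA])
    then have "ev3 (\<lambda>j k. BB (AA (RA_emb u)) (BB (RA_emb v) (RA_emb w) k) j) x z y =
      ev3 (\<lambda>j k. (\<Sum>p\<le>j. RA_scale sc (of_nat ((k + j - p) choose (j - p))) (BB (BB (RA_emb u) (RA_emb v) p) (AA (RA_emb w)) (k + j - p))) + BB (AA (RA_emb v)) (BB (RA_emb u) (RA_emb w) j) k) x z y"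
      by simp
    then show ?thesis unfolding jac_family[OF RA_emb_RA RA_emb_RA RA_emb_RA] by simp
  qed
  have Y: "A0 = 0 \<and> A1 = 0 \<and> A2 = 0"
    if "\<And>t. A0 + sc t A1 + sc (t * t) A2 = 0" for A0 A1 A2 using quad_zero that by blast
  have EY: "((br (br (w) (v)) (\<alpha> u)) - (br (\<alpha> w) (br (v) (u))) - (br (br (w) (u)) (\<alpha> v))) = 0 \<and>
     ((br (circ (w) (v)) (\<alpha> u)) + (circ (br (w) (v)) (\<alpha> u)) - (circ (\<alpha> w) (br (v) (u))) - (br (circ (w) (u)) (\<alpha> v)) - (circ (br (w) (u)) (\<alpha> v))) = 0 \<and>
     ((circ (circ (w) (v)) (\<alpha> u)) - (circ (circ (w) (u)) (\<alpha> v))) = 0" for u v w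
    by (rule Y) (use expY[of u v w] J[of u v w 0 _ 0] in simp)
  have EZ: "((circ (\<alpha> w) (circ (v) (u))) + (circ (circ (v) (u)) (\<alpha> w)) - (circ (circ (w) (u)) (\<alpha> v)) - (circ (\<alpha> v) (circ (w) (u)))) = 0" for u v w
  proof -
    have "A0 = 0 \<and> A1 = 0 \<and> ((circ (\<alpha> w) (circ (v) (u))) + (circ (circ (v) (u)) (\<alpha> w)) - (circ (circ (w) (u)) (\<alpha> v)) - (circ (\<alpha> v) (circ (w) (u)))) = 0"
      if "A0 = ((br (br (w) (v)) (\<alpha> u)) - (br (\<alpha> w) (br (v) (u))) - (br (br (w) (u)) (\<alpha> v)))"
        "A1 = ((br (circ (w) (v)) (\<alpha> u)) + (br (circ (v) (w)) (\<alpha> u)) + (br (\<alpha> w) (circ (v) (u))) - (circ (\<alpha> w) (br (v) (u))) - (circ (br (v) (u)) (\<alpha> w)) - (br (circ (w) (u)) (\<alpha> v)) - (circ (br (w) (u)) (\<alpha> v)) - (circ (\<alpha> v) (br (w) (u))))"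
      for A0 A1
      by (rule Y) (use expZ[of u v w] J[of u v w _ 0 0] that in simp)
    then show ?thesis by blast
  qed
  have lie: "hom_lie br \<alpha>"
    unfolding hom_lie_def
  proof (intro conjI allI)
    fix a b show "br a b = - br b a" by (rule anti)
  next
    fix a b c
    have "br (\<alpha> a) (br b c) = - br (br b c) (\<alpha> a)" by (rule anti)
    moreover have "br (br a c) (\<alpha> b) = - br (br c a) (\<alpha> b)" using anti[of a c] by simp
    ultimately show "br (br a b) (\<alpha> c) + br (br b c) (\<alpha> a) + br (br c a) (\<alpha> b) = 0"
      using EY[of a b c] by (simp add: algebra_simps)
  qed
  have nov2: "circ (circ a b) (\<alpha> c) = circ (circ a c) (\<alpha> b)" for a b c
    using EY[of a b c] by simp
  have nov: "hom_novikov circ \<alpha>"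
    unfolding hom_novikov_def
  proof (intro conjI allI)
    fix a b c
    show "circ (circ a b) (\<alpha> c) - circ (\<alpha> a) (circ b c) = circ (circ b a) (\<alpha> c) - circ (\<alpha> b) (circ a c)"
      using EZ[of b a c] nov2[of a c b] nov2[of b c a] by (simp add: algebra_simps)
  next
    fix a b c show "circ (circ a b) (\<alpha> c) = circ (circ a c) (\<alpha> b)" by (rule nov2)
  qed
  show "hom_GD_bialgebra br circ \<alpha>"
    unfolding hom_GD_bialgebra_def
  proof (intro conjI allI lie nov)
    fix a b c
    show "br (circ a b) (\<alpha> c) - br (circ a c) (\<alpha> b) + circ (br a b) (\<alpha> c) - circ (br a c) (\<alpha> b) - circ (\<alpha> a) (br b c) = 0"
      using EY[of a b c] by (simp add: algebra_simps)
  qed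
qed

end

theorem theorem5p2:
  fixes sc :: "complex \<Rightarrow> 'a::ab_group_add \<Rightarrow> 'a"
    and br circ :: "'a \<Rightarrow> 'a \<Rightarrow> 'a"
    and \<alpha> :: "'a \<Rightarrow> 'a"
  assumes "vector_space sc"
    and "Vector_Spaces.linear sc sc \<alpha>"
    and "cbilinear sc br"
    and "cbilinear sc circ"
  shows "hom_GD_bialgebra br circ \<alpha> \<longleftrightarrow>
           (hom_lie_conformal (RA_scale sc) RA RA_D (RA_alpha \<alpha>) (RA_bracket sc br circ)
            \<and> RA_degree 2 (RA_bracket sc br circ))"
proof -
  interpret GD sc br circ \<alpha>
    using assms by (simp add: GD_def GD_axioms_def)
  show ?thesis by (rule main)
qed


end
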